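(* Let $\mathcal{H}_A,\mathcal{H}_B$ have finite dimensions $d_A,d_B$, and put $d=\min\{d_A,d_B\}$, $D=\max\{d_A,d_B\}$. Let $\{P_k^A\}_{k=1}^{d^2}$ be a regular, coherent, degree-1 quantum design with $r=1$ in dimension $d_A$ having $d^2$ elements, and $\{P_k^B\}_{k=1}^{d^2}$ a regular, coherent, degree-1 quantum design with $r=1$ in dimension $d_B$ having $d^2$ elements. Define $$\rho=\frac{1}{d^2}\sum_{k=1}^{d^2}P_k^A\otimes P_k^B.$$ Then the operator-Schmidt coefficients of $\rho$ are $\alpha=1/\sqrt{Dd}$ with multiplicity one and $\beta=\sqrt{\frac{D-1}{D(d^2-1)}\cdot\frac{d-1}{d(d^2-1)}}$ with multiplicity $d^2-1$.
   Context: A quantum design in dimension $b$ with $v$ elements is a set of $v$ orthogonal projections $\{P_k\}_{k=1}^v$ on $\mathbb{C}^b$. It is regular with $r=1$ if every $P_k$ has rank one; coherent if $\sum_k P_k$ is a scalar multiple of the identity; and of degree 1 if there is $\mu\in\mathbb{R}$ with $\mathrm{tr}(P_kP_l)=\mu$ for all $k\ne l$. The operator-Schmidt decomposition of a state $\rho$ on $\mathcal{H}_A\otimes\mathcal{H}_B$ is a decomposition $\rho=\sum_{k=1}^{d^2}\lambda_k G_k\otimes H_k$ with real $\lambda_k\ge0$, where $\{G_k\}$ and $\{H_k\}$ are orthonormal sets (w.r.t. the Hilbert–Schmidt inner product $\mathrm{tr}(XY)$) of Hermitian operators on $\mathcal{H}_A$ and $\mathcal{H}_B$ respectively; the $\lambda_k$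 (with multiplicity) are the operator-Schmidt coefficients. Equivalently, they are the singular values of the correlation matrix $\mathcal{C}_{ij}=\mathrm{tr}(\rho\,A_i\otimes B_j)$ for orthonormal bases $\{A_i\}$, $\{B_j\}$ of the Hermitian operators on $\mathcal{H}_A$, $\mathcal{H}_B$. *)

theory Defs
  imports "Jordan_Normal_Form.Schur_Decomposition" "Jordan_Normal_Form.DL_Rank"
begin

definition mtrace :: "complex mat \<Rightarrow> complex" where
  "mtrace A = (\<Sum>i<dim_row A. A $$ (i,i))"

definition orth_proj :: "nat \<Rightarrow> complex mat \<Rightarrow> bool" where
  "orth_proj b P \<longleftrightarrow> P \<in> carrier_mat b b \<and> P * P = P \<and> mat_adjoint P = P"

definition hermitian_mat :: "nat \<Rightarrow> complex mat \<Rightarrow> bool" where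
  "hermitian_mat b X \<longleftrightarrow> X \<in> carrier_mat b b \<and> mat_adjoint X = X"

definition quantum_design :: "nat \<Rightarrow> nat \<Rightarrow> (nat \<Rightarrow> complex mat) \<Rightarrow> bool" where
  "quantum_design b v P \<longleftrightarrow> (\<forall>k<v. orth_proj b (P k))"

definition regular_r1 :: "nat \<Rightarrow> nat \<Rightarrow> (nat \<Rightarrow> complex mat) \<Rightarrow> bool" where
  "regular_r1 b v P \<longleftrightarrow> (\<forall>k<v. vec_space.rank b (P k) = 1)"

definition msum :: "nat \<Rightarrow> nat \<Rightarrow> (nat \<Rightarrow> complex mat) \<Rightarrow> nat set \<Rightarrow> complex mat" where
  "msum n m f K = mat n m (\<lambda>(i,j). \<Sum>k\<in>K. f k $$ (i,j))"

definition coherent :: "nat \<Rightarrow> nat \<Rightarrow> (nat \<Rightarrow> complex mat) \<Rightarrow> bool" where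
  "coherent b v P \<longleftrightarrow> (\<exists>c::complex. msum b b P {..<v} = c \<cdot>\<^sub>m 1\<^sub>m b)"

definition degree1 :: "nat \<Rightarrow> (nat \<Rightarrow> complex mat) \<Rightarrow> bool" where
  "degree1 v P \<longleftrightarrow> (\<exists>mu::real. \<forall>k<v. \<forall>l<v. k \<noteq> l \<longrightarrow> mtrace (P k * P l) = complex_of_real mu)"

text \<open>Kronecker (tensor) product of matrices; basis index of C^a (x) C^b is
  i * b + j (i < a, j < b).\<close>
definition kron :: "complex mat \<Rightarrow> complex mat \<Rightarrow> complex mat" where
  "kron A B = mat (dim_row A * dim_row B) (dim_col A * dim_col B)
     (\<lambda>(i,j). A $$ (i div dim_row B, j div dim_col B) * B $$ (i mod dim_row B, j mod dim_col B))"

definition op_schmidt_decomp ::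
  "nat \<Rightarrow> nat \<Rightarrow> complex mat \<Rightarrow> (nat \<Rightarrow> real) \<Rightarrow> (nat \<Rightarrow> complex mat) \<Rightarrow> (nat \<Rightarrow> complex mat) \<Rightarrow> bool" where
  "op_schmidt_decomp dA dB rho lam G H \<longleftrightarrow>
     (let n = (min dA dB)^2 in
       (\<forall>k<n. lam k \<ge> 0 \<and> hermitian_mat dA (G k) \<and> hermitian_mat dB (H k)) \<and>
       (\<forall>k<n. \<forall>l<n. mtrace (G k * G l) = (if k = l then 1 else 0)) \<and>
       (\<forall>k<n. \<forall>l<n. mtrace (H k * H l) = (if k = l then 1 else 0)) \<and>
       rho = msum (dA * dB) (dA * dB) (\<lambda>k. complex_of_real (lam k) \<cdot>\<^sub>m kron (G k) (H k)) {..<n})"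

end

theory Submission
  imports Defs "Jordan_Normal_Form.DL_Rank_Submatrix" "HOL-Library.Multiset"
begin

lemma sum_split_mult:
  fixes f :: "nat \<Rightarrow> 'a::comm_monoid_add"
  shows "(\<Sum>i<a*b. f i) = (\<Sum>p<a. \<Sum>q<b. f (p*b+q))"
proof (induction a)
  case 0 then show ?case by simp
next
  case (Suc a)
  have "{..<Suc a * b} = {..<a*b} \<union> {a*b..<a*b+b}" by auto
  then have "(\<Sum>i<Suc a*b. f i) = (\<Sum>i<a*b. f i) + (\<Sum>i\<in>{a*b..<a*b+b}. f i)"
    by (simp add: sum.union_disjoint ivl_disj_int)
  also have "(\<Sum>i\<in>{a*b..<a*b+b}. f i) = (\<Sum>q<b. f (a*b+q))"
    by (rule sum.reindex_bij_witness[where i="\<lambda>q. a*b+q" and j="\<lambda>i. i - a*b"]) auto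
  finally show ?case using Suc by simp
qed

lemma adjoint_entry:
  assumes "i < dim_col A" "j < dim_row A"
  shows "mat_adjoint A $$ (i,j) = cnj (A $$ (j,i))"
  using assms unfolding mat_adjoint_def by (simp add: mat_of_rows_index)

lemma adjoint_dims[simp]: "dim_row (mat_adjoint A) = dim_col A" "dim_col (mat_adjoint A) = dim_row A"
  unfolding mat_adjoint_def by auto

lemma mtrace_mult:
  assumes "A \<in> carrier_mat n m" "B \<in> carrier_mat m n"
  shows "mtrace (A*B) = (\<Sum>i<n. \<Sum>k<m. A$$(i,k) * B$$(k,i))"
  using assms unfolding mtrace_def by (auto simp: scalar_prod_def atLeast0LessThan intro!: sum.cong)

lemma mtrace_comm:
  assumes "A \<in> carrier_mat n m" "B \<in> carrier_mat m n"
  shows "mtrace (A*B) = mtrace (B*A)"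
  unfolding mtrace_mult[OF assms] mtrace_mult[OF assms(2,1)]
  by (subst sum.swap) (simp add: mult.commute)

lemma kron_carrier[simp]: "kron A B \<in> carrier_mat (dim_row A * dim_row B) (dim_col A * dim_col B)"
  unfolding kron_def by simp

lemma kron_dims[simp]: "dim_row (kron A B) = dim_row A * dim_row B" "dim_col (kron A B) = dim_col A * dim_col B"
  unfolding kron_def by simp_all

lemma kron_index:
  "i < dim_row A * dim_row B \<Longrightarrow> j < dim_col A * dim_col B \<Longrightarrow>
   kron A B $$ (i,j) = A $$ (i div dim_row B, j div dim_col B) * B $$ (i mod dim_row B, j mod dim_col B)"
  unfolding kron_def by simp

lemma mtrace_kron_mult:
  assumes "A \<in> carrier_mat a a" "X \<in> carrier_mat a a" "B \<in> carrier_mat b b" "Y \<in> carrier_mat b b"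
  shows "mtrace (kron A B * kron X Y) = mtrace (A*X) * mtrace (B*Y)"
proof -
  have c1: "kron A B \<in> carrier_mat (a*b) (a*b)" "kron X Y \<in> carrier_mat (a*b) (a*b)"
    using assms kron_carrier by (metis carrier_matD)+
  have b0: "b > 0" if "p*b+q < a*b" "q < b" for p q using that by auto
  have "mtrace (kron A B * kron X Y) = (\<Sum>i<a*b. \<Sum>k<a*b. kron A B $$(i,k) * kron X Y $$ (k,i))"
    by (rule mtrace_mult[OF c1])
  also have "\<dots> = (\<Sum>p<a. \<Sum>q<b. \<Sum>p'<a. \<Sum>q'<b. (A$$(p,p') * B$$(q,q')) * (X$$(p',p) * Y$$(q',q)))"
  proof -
    have lt: "p*b+q < a*b" if "p < a" "q < b" for p q
    proof -
      have "p*b+q < p*b+b" using that by simp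
      also have "\<dots> = (p+1)*b" by simp
      also have "\<dots> \<le> a*b" using that by (intro mult_right_mono) auto
      finally show ?thesis .
    qed
    show ?thesis
      unfolding sum_split_mult
      using assms lt by (intro sum.cong refl) (auto simp: kron_index)
  qed
  also have "\<dots> = (\<Sum>p<a. \<Sum>p'<a. A$$(p,p') * X$$(p',p)) * (\<Sum>q<b. \<Sum>q'<b. B$$(q,q') * Y$$(q',q))"
    unfolding sum_product
    apply (rule sum.cong[OF refl])
    apply (subst sum.swap)
    apply (rule sum.cong[OF refl])
    apply (subst sum_distrib_left[symmetric])
    apply (subst sum.swap)
    by (simp add: sum_distrib_left sum_distrib_right algebra_simps)
  also have "\<dots> = mtrace (A*X) * mtrace (B*Y)"
    using mtrace_mult assms by simp
  finally show ?thesis .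
qed

lemma msum_carrier[simp]: "msum n m f K \<in> carrier_mat n m"
  unfolding msum_def by simp
lemma msum_dims[simp]: "dim_row (msum n m f K) = n" "dim_col (msum n m f K) = m"
  unfolding msum_def by simp_all
lemma msum_index[simp]: "i < n \<Longrightarrow> j < m \<Longrightarrow> msum n m f K $$ (i,j) = (\<Sum>k\<in>K. f k $$ (i,j))"
  unfolding msum_def by simp

lemma smult_msum: "(\<And>k. k \<in> K \<Longrightarrow> f k \<in> carrier_mat n m) \<Longrightarrow> c \<cdot>\<^sub>m msum n m f K = msum n m (\<lambda>k. c \<cdot>\<^sub>m f k) K"
proof (rule eq_matI)
  fix i j assume ij: "i < dim_row (msum n m (\<lambda>k. c \<cdot>\<^sub>m f k) K)" "j < dim_col (msum n m (\<lambda>k. c \<cdot>\<^sub>m f k) K)"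
  assume fc: "\<And>k. k \<in> K \<Longrightarrow> f k \<in> carrier_mat n m"
  have "(c \<cdot>\<^sub>m f k) $$ (i,j) = c * f k $$ (i,j)" if "k \<in> K" for k
    using fc[OF that] ij by (intro index_smult_mat(1)) auto
  then show "(c \<cdot>\<^sub>m msum n m f K) $$ (i, j) = msum n m (\<lambda>k. c \<cdot>\<^sub>m f k) K $$ (i, j)"
    using ij by (simp add: sum_distrib_left)
qed auto

lemma mtrace_msum_left:
  assumes "finite K" "\<And>k. k \<in> K \<Longrightarrow> f k \<in> carrier_mat n n" "M \<in> carrier_mat n n"
  shows "mtrace (msum n n f K * M) = (\<Sum>k\<in>K. mtrace (f k * M))"
proof -
  have "mtrace (msum n n f K * M) = (\<Sum>i<n. \<Sum>j<n. (\<Sum>k\<in>K. f k $$ (i,j)) * M $$ (j,i))"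
    using assms by (simp add: mtrace_mult[of _ n n])
  also have "\<dots> = (\<Sum>k\<in>K. \<Sum>i<n. \<Sum>j<n. f k $$ (i,j) * M $$ (j,i))"
    apply (simp add: sum_distrib_right)
    apply (subst sum.swap[of _ _ K])
    apply (subst sum.swap[of _ "{..<n}" K])
    by simp
  also have "\<dots> = (\<Sum>k\<in>K. mtrace (f k * M))"
    using assms by (intro sum.cong refl) (simp add: mtrace_mult[of _ n n])
  finally show ?thesis .
qed

lemma mtrace_msum_right:
  assumes "finite K" "\<And>k. k \<in> K \<Longrightarrow> f k \<in> carrier_mat n n" "M \<in> carrier_mat n n"
  shows "mtrace (M * msum n n f K) = (\<Sum>k\<in>K. mtrace (M * f k))"
proof -
  have "mtrace (M * msum n n f K) = mtrace (msum n n f K * M)"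
    using assms by (intro mtrace_comm) auto
  also have "\<dots> = (\<Sum>k\<in>K. mtrace (f k * M))" by (rule mtrace_msum_left[OF assms])
  also have "\<dots> = (\<Sum>k\<in>K. mtrace (M * f k))"
    using assms by (intro sum.cong refl mtrace_comm) auto
  finally show ?thesis .
qed

lemma mtrace_smult_left:
  assumes "A \<in> carrier_mat n m" "B \<in> carrier_mat m n"
  shows "mtrace ((c \<cdot>\<^sub>m A) * B) = c * mtrace (A * B)"
  using assms by (simp add: mtrace_mult[of _ n m] sum_distrib_left mult.assoc)

lemma mtrace_smult_right:
  assumes "A \<in> carrier_mat n m" "B \<in> carrier_mat m n"
  shows "mtrace (A * (c \<cdot>\<^sub>m B)) = c * mtrace (A * B)"
  using assms by (simp add: mtrace_mult[of _ n m] sum_distrib_left algebra_simps)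

lemma key_left:
  assumes "finite K" "\<And>k. k \<in> K \<Longrightarrow> A k \<in> carrier_mat a a" "\<And>k. k \<in> K \<Longrightarrow> B k \<in> carrier_mat b b"
    "X \<in> carrier_mat a a" "Y \<in> carrier_mat b b"
  shows "mtrace (msum (a*b) (a*b) (\<lambda>k. c k \<cdot>\<^sub>m kron (A k) (B k)) K * kron X Y)
       = (\<Sum>k\<in>K. c k * mtrace (A k * X) * mtrace (B k * Y))"
proof -
  have kc: "kron (A k) (B k) \<in> carrier_mat (a*b) (a*b)" if "k \<in> K" for k
    using assms(2,3)[OF that] kron_carrier by (metis carrier_matD)
  have kx: "kron X Y \<in> carrier_mat (a*b) (a*b)"
    using assms(4,5) kron_carrier by (metis carrier_matD)
  show ?thesis
    apply (subst mtrace_msum_left[OF assms(1) _ kx])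
    using kc apply simp
    apply (rule sum.cong[OF refl])
    apply (subst mtrace_smult_left[OF kc kx], assumption)
    using assms by (metis mtrace_kron_mult mult.assoc)
qed

lemma key_right:
  assumes "finite K" "\<And>k. k \<in> K \<Longrightarrow> A k \<in> carrier_mat a a" "\<And>k. k \<in> K \<Longrightarrow> B k \<in> carrier_mat b b"
    "M \<in> carrier_mat (a*b) (a*b)"
  shows "mtrace (M * msum (a*b) (a*b) (\<lambda>k. c k \<cdot>\<^sub>m kron (A k) (B k)) K)
       = (\<Sum>k\<in>K. c k * mtrace (M * kron (A k) (B k)))"
proof -
  have kc: "kron (A k) (B k) \<in> carrier_mat (a*b) (a*b)" if "k \<in> K" for k
    using assms(2,3)[OF that] kron_carrier by (metis carrier_matD)
  show ?thesis
    apply (subst mtrace_msum_right[OF assms(1) _ assms(4)])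
    using kc apply simp
    apply (rule sum.cong[OF refl])
    by (rule mtrace_smult_right[OF assms(4) kc])
qed

lemma det1: assumes "B \<in> carrier_mat 1 1"
  shows "det B = B$$(0,0)"
proof -
  have "det B = (\<Sum>i<1. B $$ (i,0) * cofactor B i 0)"
    using laplace_expansion_column[OF assms, of 0] by simp
  also have "\<dots> = B $$ (0,0) * cofactor B 0 0" by simp
  also have "cofactor B 0 0 = det (mat_delete B 0 0)" unfolding cofactor_def by simp
  also have "\<dots> = 1" using mat_delete_carrier[OF assms, of 0 0] by simp
  finally show ?thesis by simp
qed

lemma det2: assumes "A \<in> carrier_mat 2 2"
  shows "det A = A$$(0,0) * A$$(1,1) - A$$(0,1) * A$$(1,0)"
proof -
  have "det A = (\<Sum>i<2. A $$ (i,0) * cofactor A i 0)"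
    using laplace_expansion_column[OF assms, of 0] by simp
  also have "\<dots> = A $$ (0,0) * cofactor A 0 0 + A $$ (1,0) * cofactor A 1 0"
    by (simp add: numeral_2_eq_2)
  also have "cofactor A 0 0 = A$$(1,1)"
  proof -
    have c: "mat_delete A 0 0 \<in> carrier_mat 1 1" using mat_delete_carrier[OF assms, of 0 0] by simp
    have "cofactor A 0 0 = det (mat_delete A 0 0)" unfolding cofactor_def by simp
    also have "\<dots> = mat_delete A 0 0 $$ (0,0)" by (rule det1[OF c])
    also have "\<dots> = A$$(1,1)" using assms unfolding mat_delete_def by auto
    finally show ?thesis .
  qed
  also have "cofactor A 1 0 = - A$$(0,1)"
  proof -
    have c: "mat_delete A 1 0 \<in> carrier_mat 1 1" using mat_delete_carrier[OF assms, of 1 0] by simp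
    have "cofactor A 1 0 = - det (mat_delete A 1 0)" unfolding cofactor_def by simp
    also have "det (mat_delete A 1 0) = mat_delete A 1 0 $$ (0,0)" by (rule det1[OF c])
    also have "\<dots> = A$$(0,1)" using assms unfolding mat_delete_def by auto
    finally show ?thesis .
  qed
  finally show ?thesis by (simp add: algebra_simps)
qed
lemma pick2_0: "i < j \<Longrightarrow> pick {i,j} 0 = i"
  unfolding pick.simps by (rule Least_equality) auto
lemma pick2_1: "i < j \<Longrightarrow> pick {i,j} (Suc 0) = j"
  unfolding pick.simps(2) pick2_0 by (rule Least_equality) auto


lemma minor_rank:
  fixes A :: "'a::field mat"
  assumes A: "A \<in> carrier_mat n n" and ij: "i < j" "j < n" and ac: "a < c" "c < n"
    and nz: "A$$(i,a) * A$$(j,c) - A$$(i,c) * A$$(j,a) \<noteq> 0"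
  shows "2 \<le> vec_space.rank n A"
proof -
  have c1: "{x. x < n \<and> x \<in> {i,j}} = {i,j}" "{x. x < n \<and> x \<in> {a,c}} = {a,c}" using ij ac by auto
  have "card {i,j} = 2" "card {a,c} = 2" using ij ac by auto
  then have S: "submatrix A {i,j} {a,c} \<in> carrier_mat 2 2"
  proof -
    have "dim_row A = n" "dim_col A = n" using A by auto
    then show ?thesis using \<open>card {i,j} = 2\<close> \<open>card {a,c} = 2\<close>
      unfolding carrier_mat_def mem_Collect_eq dim_submatrix by (simp only: c1)
  qed
  have e: "submatrix A {i,j} {a,c} $$ (0,0) = A$$(i,a)" "submatrix A {i,j} {a,c} $$ (1,1) = A$$(j,c)"
     "submatrix A {i,j} {a,c} $$ (0,1) = A$$(i,c)" "submatrix A {i,j} {a,c} $$ (1,0) = A$$(j,a)"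
  proof -
    have "dim_row A = n" "dim_col A = n" using A by auto
    then have ix: "submatrix A {i,j} {a,c} $$ (p,q) = A $$ (pick {i,j} p, pick {a,c} q)" if "p < 2" "q < 2" for p q
      unfolding submatrix_def using that \<open>card {i,j} = 2\<close> \<open>card {a,c} = 2\<close> by (simp only: c1 index_mat split)
    show "submatrix A {i,j} {a,c} $$ (0,0) = A$$(i,a)" "submatrix A {i,j} {a,c} $$ (1,1) = A$$(j,c)"
     "submatrix A {i,j} {a,c} $$ (0,1) = A$$(i,c)" "submatrix A {i,j} {a,c} $$ (1,0) = A$$(j,a)"
      using ix[of 0 0] ix[of 1 1] ix[of 0 1] ix[of 1 0] ij ac by (simp_all del: pick.simps add: pick2_0 pick2_1)
  qed
  have "det (submatrix A {i,j} {a,c}) \<noteq> 0" using det2[OF S] e nz by simp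
  from vec_space.rank_gt_minor[OF A this] show ?thesis using c1 \<open>card {a,c} = 2\<close> by (simp only: c1)
qed

lemma rank1_minors:
  fixes A :: "'a::field mat"
  assumes A: "A \<in> carrier_mat n n" and r: "vec_space.rank n A < 2"
    and idx: "i < n" "j < n" "a < n" "c < n"
  shows "A$$(i,a) * A$$(j,c) = A$$(i,c) * A$$(j,a)"
proof -
  have m: "A$$(i,a) * A$$(j,c) - A$$(i,c) * A$$(j,a) = 0" if "i < j" "j < n" "a < c" "c < n" for i j a c
    using minor_rank[OF A that] r by fastforce
  show ?thesis
  proof (cases "i = j \<or> a = c")
    case True then show ?thesis by (auto simp: mult.commute)
  next
    case False
    then have "i < j \<or> j < i" "a < c \<or> c < a" by auto
    then show ?thesis
    proof (elim disjE)
      assume "i < j" "a < c" then show ?thesis using m[of i j a c] idx by simp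
    next
      assume "j < i" "a < c" then show ?thesis using m[of j i a c] idx by (simp add: mult.commute)
    next
      assume "i < j" "c < a" then show ?thesis using m[of i j c a] idx by (simp add: mult.commute)
    next
      assume "j < i" "c < a" then show ?thesis using m[of j i c a] idx by (simp add: mult.commute)
    qed
  qed
qed

lemma proj_rank1_trace:
  assumes P: "orth_proj b P" and r: "vec_space.rank b P = 1"
  shows "mtrace P = 1"
proof -
  have Pc: "P \<in> carrier_mat b b" and PP: "P * P = P" using P unfolding orth_proj_def by auto
  have "\<exists>i0<b. \<exists>a0<b. P $$ (i0,a0) \<noteq> 0"
  proof (rule ccontr)
    assume "\<not> ?thesis"
    then have "P = 0\<^sub>m b b" using Pc by (intro eq_matI) auto
    then show False using r vec_space.rank_0I by (metis zero_neq_one)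
  qed
  then obtain i0 a0 where i0: "i0 < b" "a0 < b" "P $$ (i0,a0) \<noteq> 0" by blast
  have mi: "P$$(i0,a0) * P$$(k,k) = P$$(i0,k) * P$$(k,a0)" if "k < b" for k
    using rank1_minors[OF Pc _ i0(1) that i0(2) that] r by simp
  have "mtrace P * P $$ (i0,a0) = (\<Sum>k<b. P$$(i0,k) * P$$(k,a0))"
    unfolding mtrace_def using Pc mi by (simp add: sum_distrib_right) (simp add: mult.commute)
  also have "\<dots> = (P * P) $$ (i0,a0)" using Pc i0 by (simp add: scalar_prod_def atLeast0LessThan)
  also have "\<dots> = P $$ (i0,a0)" using PP by simp
  finally show ?thesis using i0(3) by simp
qed

lemma herm_entry:
  assumes "X \<in> carrier_mat b b" "mat_adjoint X = X" "i < b" "j < b"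
  shows "X $$ (i,j) = cnj (X $$ (j,i))"
proof -
  have "X $$ (i,j) = mat_adjoint X $$ (i,j)" using assms(2) by simp
  also have "\<dots> = cnj (X $$ (j,i))" using assms by (intro adjoint_entry) auto
  finally show ?thesis .
qed

lemma proj_tr_nonneg:
  assumes P: "orth_proj b P" and Q: "orth_proj b Q"
  shows "\<exists>r\<ge>0. mtrace (P*Q) = of_real r"
proof -
  have Pc: "P \<in> carrier_mat b b" and PP: "P * P = P" and Pa: "mat_adjoint P = P" using P unfolding orth_proj_def by auto
  have Qc: "Q \<in> carrier_mat b b" and QQ: "Q * Q = Q" and Qa: "mat_adjoint Q = Q" using Q unfolding orth_proj_def by auto
  define M where "M = P * Q"
  have Mc: "M \<in> carrier_mat b b" using Pc Qc M_def by simp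
  have "P * ((P * Q) * Q) = P * (P * (Q * Q))" using Pc Qc by (simp add: assoc_mult_mat[of P b b Q b Q b])
  also have "\<dots> = (P * P) * (Q * Q)" using Pc Qc by (simp add: assoc_mult_mat[of P b b P b "Q*Q" b])
  finally have 1: "P * Q = P * ((P * Q) * Q)" using PP QQ by simp
  have 2: "mtrace (P * ((P * Q) * Q)) = mtrace (((P * Q) * Q) * P)"
    using Pc Qc by (intro mtrace_comm[of _ b b]) auto
  have 3: "((P * Q) * Q) * P = M * (Q * P)" unfolding M_def using Pc Qc
    by (intro assoc_mult_mat[of "P*Q" b b Q b P b]) auto
  have "mtrace (P*Q) = mtrace (M * (Q * P))" using 1 2 3 by simp
  also have "\<dots> = (\<Sum>i<b. \<Sum>k<b. M$$(i,k) * (Q*P)$$(k,i))"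
    using Mc Pc Qc by (intro mtrace_mult) auto
  also have "\<dots> = (\<Sum>i<b. \<Sum>k<b. of_real ((cmod (M$$(i,k)))^2))"
  proof (intro sum.cong refl)
    fix i k assume ik: "i \<in> {..<b}" "k \<in> {..<b}"
    have "(Q*P)$$(k,i) = (\<Sum>l<b. Q$$(k,l) * P$$(l,i))"
      using ik Pc Qc by (simp add: scalar_prod_def atLeast0LessThan)
    also have "\<dots> = (\<Sum>l<b. cnj (P$$(i,l) * Q$$(l,k)))"
    proof (intro sum.cong refl)
      fix l assume l: "l \<in> {..<b}"
      have "Q$$(k,l) = cnj (Q$$(l,k))" "P$$(l,i) = cnj (P$$(i,l))"
        using ik l herm_entry[OF Qc Qa, of k l] herm_entry[OF Pc Pa, of l i] by simp_all
      then show "Q$$(k,l) * P$$(l,i) = cnj (P$$(i,l) * Q$$(l,k))" by (simp add: mult.commute)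
    qed
    also have "\<dots> = cnj (M$$(i,k))"
      using ik Pc Qc M_def by (simp add: scalar_prod_def atLeast0LessThan)
    finally show "M$$(i,k) * (Q*P)$$(k,i) = of_real ((cmod (M$$(i,k)))^2)"
      using complex_norm_square[of "M$$(i,k)"] by simp
  qed
  also have "\<dots> = of_real (\<Sum>i<b. \<Sum>k<b. (cmod (M$$(i,k)))^2)" by simp
  finally have "mtrace (P*Q) = of_real (\<Sum>i<b. \<Sum>k<b. (cmod (M$$(i,k)))^2)" .
  moreover have "(\<Sum>i<b. \<Sum>k<b. (cmod (M$$(i,k)))^2) \<ge> 0" by (intro sum_nonneg) simp
  ultimately show ?thesis by blast
qed

lemma design_facts:
  assumes qd: "quantum_design b N P" and r1: "regular_r1 b N P" and coh: "coherent b N P"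
    and b: "b \<ge> 1"
  shows "\<forall>k<N. P k \<in> carrier_mat b b" and "\<forall>k<N. mtrace (P k) = 1"
    and "\<forall>k<N. mtrace (P k * P k) = 1"
    and "\<forall>X \<in> carrier_mat b b. (\<Sum>k<N. mtrace (P k * X)) = of_real (real N / real b) * mtrace X"
proof -
  show Pc: "\<forall>k<N. P k \<in> carrier_mat b b" using qd unfolding quantum_design_def orth_proj_def by auto
  show tr1: "\<forall>k<N. mtrace (P k) = 1" using qd r1 proj_rank1_trace
    unfolding quantum_design_def regular_r1_def by blast
  show "\<forall>k<N. mtrace (P k * P k) = 1" using qd tr1 unfolding quantum_design_def orth_proj_def by auto
  obtain c where c: "msum b b P {..<N} = c \<cdot>\<^sub>m 1\<^sub>m b" using coh unfolding coherent_def by auto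
  have gen: "(\<Sum>k<N. mtrace (P k * X)) = c * mtrace X" if X: "X \<in> carrier_mat b b" for X
  proof -
    have "(\<Sum>k<N. mtrace (P k * X)) = mtrace (msum b b P {..<N} * X)"
      using Pc X by (intro mtrace_msum_left[symmetric]) auto
    also have "\<dots> = c * mtrace (1\<^sub>m b * X)" unfolding c using X by (intro mtrace_smult_left) auto
    also have "\<dots> = c * mtrace X" using X by simp
    finally show ?thesis .
  qed
  have "(\<Sum>k<N. mtrace (P k * 1\<^sub>m b)) = (\<Sum>k<N. (1::complex))"
    using Pc tr1 by (intro sum.cong refl) (metis lessThan_iff right_mult_one_mat)
  then have "of_nat N = c * mtrace (1\<^sub>m b :: complex mat)"
    using gen[of "1\<^sub>m b"] by simp
  also have "mtrace (1\<^sub>m b :: complex mat) = of_nat b" unfolding mtrace_def by simp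
  finally have "c = of_real (real N / real b)" using b by (simp add: field_simps)
  then show "\<forall>X \<in> carrier_mat b b. (\<Sum>k<N. mtrace (P k * X)) = of_real (real N / real b) * mtrace X"
    using gen by auto
qed

lemma design_gram:
  assumes qd: "quantum_design b N P" and r1: "regular_r1 b N P" and coh: "coherent b N P"
    and b: "b \<ge> 1" and N: "N \<ge> 1"
    and mu: "\<forall>k<N. \<forall>l<N. k \<noteq> l \<longrightarrow> mtrace (P k * P l) = complex_of_real mu"
  shows "\<forall>k<N. \<forall>l<N. mtrace (P k * P l) = (if k = l then 1 else of_real mu)"
    and "1 + (real N - 1) * mu = real N / real b"
    and "N \<ge> 2 \<Longrightarrow> mu \<ge> 0"
proof -
  note F = design_facts[OF qd r1 coh b]
  show G: "\<forall>k<N. \<forall>l<N. mtrace (P k * P l) = (if k = l then 1 else of_real mu)"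
    using F(3) mu by auto
  have "(\<Sum>k<N. mtrace (P k * P 0)) = of_real (real N / real b) * mtrace (P 0)"
    using F(1,4) N by auto
  also have "\<dots> = of_real (real N / real b)" using F(2) N by auto
  finally have e: "(\<Sum>k<N. mtrace (P k * P 0)) = of_real (real N / real b)" .
  have "(\<Sum>k<N. mtrace (P k * P 0)) = (\<Sum>k<N. (if k = 0 then 1 else of_real mu))"
    using G N by (intro sum.cong) auto
  also have "\<dots> = 1 + (\<Sum>k\<in>{..<N}-{0}. of_real mu)"
    using N by (subst sum.remove[of _ 0]) auto
  also have "\<dots> = of_real (1 + (real N - 1) * mu)" using N by (simp add: of_nat_diff)
  finally show "1 + (real N - 1) * mu = real N / real b" using e by (metis of_real_eq_iff)
  show "mu \<ge> 0" if "N \<ge> 2"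
  proof -
    have "orth_proj b (P 0)" "orth_proj b (P 1)" using qd that unfolding quantum_design_def by auto
    from proj_tr_nonneg[OF this] obtain r where "r \<ge> 0" "mtrace (P 0 * P 1) = of_real r" by blast
    moreover have "mtrace (P 0 * P 1) = of_real mu" using mu that by auto
    ultimately show ?thesis by simp
  qed
qed

definition hv :: "nat \<Rightarrow> nat \<Rightarrow> real" where
  "hv N k = (if k = 0 then 1 else 0) - 1 / sqrt (real N)"
definition hW :: "nat \<Rightarrow> nat \<Rightarrow> nat \<Rightarrow> real" where
  "hW N k j = (if k = j then 1 else 0) - hv N k * hv N j / (1 - 1 / sqrt (real N))"

lemma hW_sym: "hW N k j = hW N j k"
  unfolding hW_def by (auto simp: mult.commute)

lemma hv_sum: "N \<ge> 1 \<Longrightarrow> (\<Sum>k<N. hv N k) = 1 - sqrt (real N)"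
proof -
  assume N: "N \<ge> 1"
  have "(\<Sum>k<N. hv N k) = (\<Sum>k<N. (if k = 0 then 1 else 0)) - real N / sqrt (real N)"
    unfolding hv_def by (simp add: sum_subtractf)
  also have "(\<Sum>k<N. (if k = 0 then 1 else 0::real)) = 1" using N by (simp add: sum.delta)
  also have "real N / sqrt (real N) = sqrt (real N)" using N by (simp add: real_div_sqrt)
  finally show ?thesis .
qed

lemma hv_sq_sum: "N \<ge> 1 \<Longrightarrow> (\<Sum>k<N. hv N k * hv N k) = 2 - 2 / sqrt (real N)"
proof -
  assume N: "N \<ge> 1"
  define s where "s = 1 / sqrt (real N)"
  have hvs: "hv N k = (if k = 0 then 1 else 0) - s" for k unfolding hv_def s_def by simp
  have "(\<Sum>k<N. hv N k * hv N k) = (\<Sum>k<N. (if k = 0 then 1 - 2*s else 0) + s*s)"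
    unfolding hvs by (intro sum.cong refl) (auto simp: algebra_simps)
  also have "\<dots> = 1 - 2 * s + real N * (s * s)" using N by (simp add: sum.distrib sum.delta)
  also have "real N * (s * s) = 1" unfolding s_def using N by (simp add: field_simps)
  finally show ?thesis unfolding s_def by simp
qed

lemma hW_colsum:
  assumes N: "N \<ge> 1" and j: "j < N"
  shows "(\<Sum>k<N. hW N k j) = (if j = 0 then sqrt (real N) else 0)"
proof (cases "N = 1")
  case True then show ?thesis using j unfolding hW_def hv_def by simp
next
  case False
  then have N2: "N \<ge> 2" using N by simp
  define s where "s = 1 / sqrt (real N)"
  have sq: "sqrt (real N) > 1" using N2 by (simp add: real_less_rsqrt)
  have s1: "1 - s \<noteq> 0" "1 - s > 0" unfolding s_def using sq by (auto simp: field_simps)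
  have Ns: "real N * s = sqrt (real N)" unfolding s_def using N by (simp add: real_div_sqrt)
  have "(\<Sum>k<N. hW N k j) = (\<Sum>k<N. (if k = j then 1 else 0)) - (\<Sum>k<N. hv N k) * hv N j / (1 - s)"
    unfolding hW_def s_def by (simp add: sum_subtractf sum_divide_distrib sum_distrib_right)
  also have "(\<Sum>k<N. (if k = j then 1 else 0::real)) = 1" using j by (simp add: sum.delta)
  also have "(\<Sum>k<N. hv N k) = 1 - sqrt (real N)" using hv_sum N by simp
  finally have e: "(\<Sum>k<N. hW N k j) = 1 - (1 - sqrt (real N)) * hv N j / (1 - s)" .
  show ?thesis
  proof (cases "j = 0")
    case True
    then have "hv N j = 1 - s" unfolding hv_def s_def by simp
    then show ?thesis using e s1 True by simp
  next
    case False
    then have "hv N j = - s" unfolding hv_def s_def by simp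
    then have "(\<Sum>k<N. hW N k j) = 1 + (1 - sqrt (real N)) * s / (1 - s)" using e by simp
    also have "\<dots> = (1 - s + s - real N * s * s) / (1 - s)"
      using s1 Ns by (simp add: field_simps)
    also have "real N * s * s = 1" unfolding s_def using N by (simp add: field_simps)
    finally show ?thesis using False by simp
  qed
qed

lemma hW_orth:
  assumes N: "N \<ge> 1" and i: "i < N" and j: "j < N"
  shows "(\<Sum>k<N. hW N k i * hW N k j) = (if i = j then 1 else 0)"
proof (cases "N = 1")
  case True then show ?thesis using i j unfolding hW_def hv_def by simp
next
  case False
  then have N2: "N \<ge> 2" using N by simp
  define s where "s = 1 / sqrt (real N)"
  have sq: "sqrt (real N) > 1" using N2 by (simp add: real_less_rsqrt)
  have s1: "1 - s \<noteq> 0" unfolding s_def using sq by (auto simp: field_simps)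
  define v where "v = hv N"
  define t where "t = 1 / (1 - s)"
  have ts: "(1 - s) * t = 1" unfolding t_def using s1 by simp
  have W: "hW N k j = (if k = j then 1 else 0) - v k * v j * t" for k j
    unfolding hW_def v_def s_def t_def by simp
  have vv: "(\<Sum>k<N. v k * v k) = 2 * (1 - s)" using hv_sq_sum[OF N] unfolding v_def s_def by simp
  have "(\<Sum>k<N. hW N k i * hW N k j) =
     (\<Sum>k<N. (if k = i then (if i = j then 1 else 0) else 0)
        - (if k = i then v j * v i * t else 0) - (if k = j then v i * v j * t else 0)
        + (v k * v k) * (v i * v j * t * t))"
    unfolding W by (intro sum.cong refl) (auto simp: algebra_simps)
  also have "\<dots> = (if i = j then 1 else 0) - v j * v i * t - v i * v j * t
      + (\<Sum>k<N. v k * v k) * (v i * v j * t * t)"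
    using i j by (simp add: sum.distrib sum_subtractf sum_distrib_right)
  also have "\<dots> = (if i = j then 1 else 0) - 2 * (v i * v j * t) + 2 * (v i * v j * t) * ((1 - s) * t)"
    unfolding vv by (simp add: algebra_simps)
  also have "\<dots> = (if i = j then 1 else 0)" unfolding ts by simp
  finally show ?thesis .
qed

lemma sum_if_const_card:
  "finite S \<Longrightarrow> (\<Sum>m\<in>S. if P m then c else 0) = real (card {m\<in>S. P m}) * (c::real)"
  by (simp add: sum.inter_filter[symmetric])

lemma count_final:
  fixes lam :: "nat \<Rightarrow> real"
  assumes N: "N \<ge> 2" and vals: "\<forall>m<N. lam m = \<alpha> \<or> lam m = \<beta> \<or> lam m = 0"
    and uniq: "\<forall>l<N. \<forall>m<N. lam l = \<alpha> \<longrightarrow> lam m = \<alpha> \<longrightarrow> l = m"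
    and ab: "\<alpha> > \<beta>" "\<beta> > 0"
    and sq: "(\<Sum>m<N. (lam m)^2) = \<alpha>^2 + (real N - 1) * \<beta>^2"
  shows "mset (map lam [0..<N]) = {#\<alpha>#} + replicate_mset (N-1) \<beta>"
proof -
  define A where "A = {m\<in>{..<N}. lam m = \<alpha>}"
  define B where "B = {m\<in>{..<N}. lam m = \<beta>}"
  have fin: "finite A" "finite B" unfolding A_def B_def by auto
  have disj: "A \<inter> B = {}" unfolding A_def B_def using ab by auto
  have sub: "A \<union> B \<subseteq> {..<N}" unfolding A_def B_def by auto
  have cAB: "card A + card B \<le> N"
    using card_Un_disjoint[OF fin disj] card_mono[OF _ sub] by simp
  have cA: "card A \<le> 1"
    using uniq unfolding A_def by (auto simp: card_le_Suc0_iff_eq)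
  have "(\<Sum>m<N. (lam m)^2) = (\<Sum>m<N. (if lam m = \<alpha> then \<alpha>^2 else 0) + (if lam m = \<beta> then \<beta>^2 else 0))"
    using vals ab by (intro sum.cong refl) auto
  also have "\<dots> = real (card A) * \<alpha>^2 + real (card B) * \<beta>^2"
    unfolding sum.distrib A_def B_def by (simp add: sum_if_const_card)
  finally have eq: "real (card A) * \<alpha>^2 + real (card B) * \<beta>^2 = \<alpha>^2 + (real N - 1) * \<beta>^2"
    using sq by simp
  have a2: "\<alpha>^2 > \<beta>^2" using ab by (intro power_strict_mono) auto
  have b2: "\<beta>^2 > 0" using ab by simp
  have cA1: "card A = 1"
  proof (rule ccontr)
    assume "card A \<noteq> 1"
    then have "card A = 0" using cA by simp
    then have "real (card B) * \<beta>^2 = \<alpha>^2 + (real N - 1) * \<beta>^2" using eq by simp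
    also have "\<dots> > real N * \<beta>^2" using a2 by (simp add: algebra_simps)
    finally have "real (card B) > real N" using b2 by (simp add: mult_less_cancel_right)
    then show False using cAB by linarith
  qed
  then have "real (card B) * \<beta>^2 = (real N - 1) * \<beta>^2" using eq by simp
  then have "real (card B) = real N - 1" using b2 by simp
  then have cB: "card B = N - 1" using N by linarith
  have AB: "A \<union> B = {..<N}"
    using card_Un_disjoint[OF fin disj] cA1 cB N by (intro card_subset_eq[OF _ sub]) auto
  have allv: "\<forall>m<N. lam m = \<alpha> \<or> lam m = \<beta>" using AB unfolding A_def B_def by auto
  show ?thesis
  proof (rule multiset_eqI)
    fix x
    have "count (mset (map lam [0..<N])) x = card {i. i < N \<and> x = lam i}"
      unfolding count_mset count_list_eq_length_filter length_filter_conv_card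
      by (intro arg_cong[where f=card]) auto
    also have "\<dots> = (if x = \<alpha> then 1 else 0) + (if x = \<beta> then N - 1 else 0)"
    proof -
      have "x = \<alpha> \<Longrightarrow> {i. i < N \<and> x = lam i} = A" unfolding A_def by auto
      moreover have "x = \<beta> \<Longrightarrow> {i. i < N \<and> x = lam i} = B" unfolding B_def by auto
      moreover have "x \<noteq> \<alpha> \<Longrightarrow> x \<noteq> \<beta> \<Longrightarrow> {i. i < N \<and> x = lam i} = {}" using allv by auto
      ultimately show ?thesis using cA1 cB ab by auto
    qed
    also have "\<dots> = count ({#\<alpha>#} + replicate_mset (N-1) \<beta>) x" by simp
    finally show "count (mset (map lam [0..<N])) x = count ({#\<alpha>#} + replicate_mset (N-1) \<beta>) x" .
  qed
qed

lemma sum_gram_left: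
  fixes f :: "nat \<Rightarrow> complex"
  assumes "j < N"
  shows "(\<Sum>k<N. (if k = j then 1 else c) * f k) = (1 - c) * f j + c * (\<Sum>k<N. f k)"
proof -
  have "(\<Sum>k<N. (if k = j then 1 else c) * f k) = (\<Sum>k<N. c * f k + (if k = j then (1 - c) * f k else 0))"
    by (intro sum.cong refl) (auto simp: algebra_simps)
  also have "\<dots> = c * (\<Sum>k<N. f k) + (1 - c) * f j"
    using assms by (simp add: sum.distrib sum_distrib_left)
  finally show ?thesis by simp
qed

lemma sum_gram_right:
  fixes f :: "nat \<Rightarrow> complex"
  assumes "j < N"
  shows "(\<Sum>k<N. f k * (if k = j then 1 else c)) = (1 - c) * f j + c * (\<Sum>k<N. f k)"
  using sum_gram_left[OF assms, of c f] by (simp add: mult.commute)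

lemma sqrt_solve:
  fixes x y :: real
  assumes "x \<ge> 0" "N > 0" "(N * x)^2 = y"
  shows "x = sqrt y / N"
proof -
  have "sqrt y = \<bar>N * x\<bar>" using assms(3) real_sqrt_abs by blast
  then have "sqrt y = N * x" using assms by simp
  then show ?thesis using assms by simp
qed

lemma of_real_eqD: "(complex_of_real x = complex_of_real y) \<Longrightarrow> x = y" by simp

lemma uniq_core:
  fixes lam :: "nat \<Rightarrow> real" and a b :: "nat \<Rightarrow> nat \<Rightarrow> complex" and muA muB :: real
  assumes N: "N \<ge> 2"
    and lam0: "\<forall>m<N. lam m \<ge> 0"
    and muA: "muA \<ge> 0" "1 - muA > 0" and muB: "muB \<ge> 0" "1 - muB > 0"
    and mu0: "\<not> (muA = 0 \<and> muB = 0)"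
    and E1: "\<forall>m<N. \<forall>j<N. of_real (lam m) * a m j = (\<Sum>k<N. (if k = j then 1 else of_real muA) * b m k) / of_nat N"
    and E2: "\<forall>m<N. \<forall>j<N. of_real (lam m) * b m j = (\<Sum>k<N. a m k * (if k = j then 1 else of_real muB)) / of_nat N"
    and E3: "\<forall>l<N. \<forall>m<N. (if l = m then of_real (lam m) else 0) = (\<Sum>k<N. a l k * b m k) / of_nat N"
    and Msum: "(\<Sum>m<N. (lam m)^2) = (1 + (real N - 1) * muA * muB) / real N"
  defines "cA \<equiv> 1 + (real N - 1) * muA" and "cB \<equiv> 1 + (real N - 1) * muB"
  defines "\<alpha>c \<equiv> sqrt (cA * cB) / real N" and "\<beta>c \<equiv> sqrt ((1 - muA) * (1 - muB)) / real N"
  shows "mset (map lam [0..<N]) = {#\<alpha>c#} + replicate_mset (N-1) \<beta>c"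
proof -
  define n :: complex where "n = of_nat N"
  have n0: "n \<noteq> 0" unfolding n_def using N by simp
  have Npos: "real N > 0" using N by simp
  define Sa where "Sa m = (\<Sum>k<N. a m k)" for m
  define Sb where "Sb m = (\<Sum>k<N. b m k)" for m
  have cApos: "cA > 0" unfolding cA_def using muA N by (simp add: add_pos_nonneg)
  have cBpos: "cB > 0" unfolding cB_def using muB N by (simp add: add_pos_nonneg)
  have E1': "n * of_real (lam m) * a m j = of_real (1 - muA) * b m j + of_real muA * Sb m" if "m < N" "j < N" for m j
  proof -
    have "of_real (lam m) * a m j = ((1 - of_real muA) * b m j + of_real muA * Sb m) / n"
      using E1 that sum_gram_left[OF that(2), of "of_real muA" "b m"] unfolding n_def Sb_def by simp
    then show ?thesis using n0 by (simp add: field_simps)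
  qed
  have E2': "n * of_real (lam m) * b m j = of_real (1 - muB) * a m j + of_real muB * Sa m" if "m < N" "j < N" for m j
  proof -
    have "of_real (lam m) * b m j = ((1 - of_real muB) * a m j + of_real muB * Sa m) / n"
      using E2 that sum_gram_right[OF that(2), of "a m" "of_real muB"] unfolding n_def Sa_def by simp
    then show ?thesis using n0 by (simp add: field_simps)
  qed
  have SA: "n * of_real (lam m) * Sa m = of_real cA * Sb m" if "m < N" for m
  proof -
    have "n * of_real (lam m) * Sa m = (\<Sum>j<N. n * of_real (lam m) * a m j)"
      unfolding Sa_def by (simp add: sum_distrib_left)
    also have "\<dots> = (\<Sum>j<N. of_real (1 - muA) * b m j + of_real muA * Sb m)"
      using E1' that by simp
    also have "\<dots> = of_real (1 - muA) * Sb m + n * of_real muA * Sb m"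
      unfolding Sb_def n_def by (simp add: sum.distrib sum_distrib_left mult.assoc)
    also have "\<dots> = of_real cA * Sb m" unfolding cA_def n_def using N
      by (simp add: algebra_simps of_nat_diff)
    finally show ?thesis .
  qed
  have SB: "n * of_real (lam m) * Sb m = of_real cB * Sa m" if "m < N" for m
  proof -
    have "n * of_real (lam m) * Sb m = (\<Sum>j<N. n * of_real (lam m) * b m j)"
      unfolding Sb_def by (simp add: sum_distrib_left)
    also have "\<dots> = (\<Sum>j<N. of_real (1 - muB) * a m j + of_real muB * Sa m)"
      using E2' that by simp
    also have "\<dots> = of_real (1 - muB) * Sa m + n * of_real muB * Sa m"
      unfolding Sa_def n_def by (simp add: sum.distrib sum_distrib_left mult.assoc)
    also have "\<dots> = of_real cB * Sa m" unfolding cB_def n_def using N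
      by (simp add: algebra_simps of_nat_diff)
    finally show ?thesis .
  qed
  have ab2: "cA * cB > (1 - muA) * (1 - muB)"
  proof -
    have "cA \<ge> 1 - muA" "cB \<ge> 1 - muB" unfolding cA_def cB_def using N muA muB
      by (auto intro!: order.trans[OF _ mult_nonneg_nonneg])
    moreover have "cA > 1 - muA \<or> cB > 1 - muB"
      using mu0 muA muB N unfolding cA_def cB_def by (auto simp: algebra_simps)
    ultimately show ?thesis
    proof (elim disjE)
      assume h: "1 - muA \<le> cA" "1 - muB \<le> cB" "1 - muA < cA"
      have "(1 - muA) * (1 - muB) < cA * (1 - muB)" using h muB by (intro mult_strict_right_mono) auto
      also have "\<dots> \<le> cA * cB" using h cApos by (intro mult_left_mono) auto
      finally show ?thesis .
    next
      assume h: "1 - muA \<le> cA" "1 - muB \<le> cB" "1 - muB < cB"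
      have "(1 - muA) * (1 - muB) < (1 - muA) * cB" using h muA by (intro mult_strict_left_mono) auto
      also have "\<dots> \<le> cA * cB" using h cBpos by (intro mult_right_mono) auto
      finally show ?thesis .
    qed
  qed
  have bpos: "\<beta>c > 0" unfolding \<beta>c_def using muA muB Npos by simp
  have ab: "\<alpha>c > \<beta>c" unfolding \<alpha>c_def \<beta>c_def using ab2 Npos by (simp add: divide_strict_right_mono)
  have cls: "(Sa m \<noteq> 0 \<and> lam m = \<alpha>c) \<or> (Sa m = 0 \<and> (lam m = \<beta>c \<or> lam m = 0))" if m: "m < N" for m
  proof (cases "Sa m = 0")
    case False
    have "n * n * of_real (lam m) * of_real (lam m) * Sa m = n * of_real (lam m) * of_real cA * Sb m"
      using SA[OF m] by (metis mult.assoc mult.commute)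
    also have "\<dots> = of_real cA * of_real cB * Sa m" using SB[OF m] by (simp add: algebra_simps)
    finally have "n * n * of_real (lam m) * of_real (lam m) = of_real cA * of_real cB" using False by simp
    then have "complex_of_real ((real N * lam m)^2) = complex_of_real (cA * cB)"
      unfolding n_def by (simp add: power2_eq_square algebra_simps)
    then have "(real N * lam m)^2 = cA * cB" by (rule of_real_eqD)
    then have "lam m = \<alpha>c" unfolding \<alpha>c_def using lam0 m Npos by (intro sqrt_solve) auto
    then show ?thesis using False by simp
  next
    case True
    have Sb0: "Sb m = 0" using SA[OF m] True cApos by simp
    show ?thesis
    proof (cases "\<exists>j<N. a m j \<noteq> 0")
      case True
      then obtain j where j: "j < N" "a m j \<noteq> 0" by blast
      have "n * n * of_real (lam m) * of_real (lam m) * a m j = n * of_real (lam m) * (of_real (1 - muA) * b m j)"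
        using E1'[OF m j(1)] Sb0 by (metis add.right_neutral mult.assoc mult.commute mult_zero_right)
      also have "\<dots> = of_real (1 - muA) * (n * of_real (lam m) * b m j)" by (simp add: algebra_simps)
      also have "n * of_real (lam m) * b m j = of_real (1 - muB) * a m j"
        using E2'[OF m j(1)] \<open>Sa m = 0\<close> by simp
      also have "of_real (1 - muA) * (of_real (1 - muB) * a m j) = of_real (1 - muA) * of_real (1 - muB) * a m j"
        by (simp add: algebra_simps)
      finally have "n * n * of_real (lam m) * of_real (lam m) = of_real (1 - muA) * of_real (1 - muB)"
        using j(2) by simp
      then have "complex_of_real ((real N * lam m)^2) = complex_of_real ((1 - muA) * (1 - muB))"
        unfolding n_def by (simp add: power2_eq_square algebra_simps)
      then have "(real N * lam m)^2 = (1 - muA) * (1 - muB)" by (rule of_real_eqD)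
      then have "lam m = \<beta>c" unfolding \<beta>c_def using lam0 m Npos by (intro sqrt_solve) auto
      then show ?thesis using \<open>Sa m = 0\<close> by simp
    next
      case False
      then have "(\<Sum>k<N. a m k * b m k) = 0" by simp
      moreover have "(if m = m then of_real (lam m) else 0) = (\<Sum>k<N. a m k * b m k) / of_nat N" using E3 m by blast
      ultimately have "of_real (lam m) = (0::complex)" by simp
      then show ?thesis using \<open>Sa m = 0\<close> by simp
    qed
  qed
  have vals: "\<forall>m<N. lam m = \<alpha>c \<or> lam m = \<beta>c \<or> lam m = 0" using cls by blast
  have aS: "Sa m \<noteq> 0" if "m < N" "lam m = \<alpha>c" for m
    using cls[OF that(1)] that(2) ab bpos by auto
  have uniq: "\<forall>l<N. \<forall>m<N. lam l = \<alpha>c \<longrightarrow> lam m = \<alpha>c \<longrightarrow> l = m"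
  proof (intro allI impI, rule ccontr)
    fix l m assume lm: "l < N" "m < N" "lam l = \<alpha>c" "lam m = \<alpha>c" "l \<noteq> m"
    have Sam: "Sa m \<noteq> 0" "Sa l \<noteq> 0" using aS lm by auto
    have Sbm: "Sb m \<noteq> 0" using SB[OF lm(2)] Sam cBpos n0 by auto
    define K where "K = of_real (1 - muB) * of_real muA * Sb m + n * of_real (lam m) * of_real muB * Sa m"
    define co where "co = n * n * of_real (lam m) * of_real (lam m) - of_real (1 - muA) * of_real (1 - muB)"
    have bco: "co * b m j = K" if j: "j < N" for j
    proof -
      have "n * n * of_real (lam m) * of_real (lam m) * b m j
          = n * of_real (lam m) * (of_real (1 - muB) * a m j + of_real muB * Sa m)"
        using E2'[OF lm(2) j] by (metis mult.assoc mult.commute)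
      also have "\<dots> = of_real (1 - muB) * (n * of_real (lam m) * a m j) + n * of_real (lam m) * of_real muB * Sa m"
        by (simp add: algebra_simps)
      also have "\<dots> = of_real (1 - muB) * (of_real (1 - muA) * b m j + of_real muA * Sb m) + n * of_real (lam m) * of_real muB * Sa m"
        using E1'[OF lm(2) j] by simp
      finally show ?thesis unfolding co_def K_def by (simp add: algebra_simps)
    qed
    have co0: "co \<noteq> 0"
    proof
      assume "co = 0"
      then have "complex_of_real ((real N * lam m)^2) = complex_of_real ((1 - muA) * (1 - muB))"
        unfolding co_def n_def by (simp add: power2_eq_square algebra_simps)
      then have "(real N * lam m)^2 = (1 - muA) * (1 - muB)" by (rule of_real_eqD)
      then have "lam m = \<beta>c" unfolding \<beta>c_def using lam0 lm Npos by (intro sqrt_solve) auto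
      then show False using lm ab by simp
    qed
    have bconst: "b m j = K / co" if "j < N" for j using bco[OF that] co0 by (simp add: field_simps)
    have "Sb m = n * (K / co)" unfolding Sb_def n_def using bconst by simp
    then have bj: "b m j = Sb m / n" if "j < N" for j using bconst[OF that] n0 by simp
    have "(if l = m then of_real (lam m) else 0) = (\<Sum>k<N. a l k * b m k) / of_nat N" using E3 lm(1,2) by blast
    then have "(0::complex) = (\<Sum>k<N. a l k * b m k) / of_nat N" using lm(5) by simp
    also have "(\<Sum>k<N. a l k * b m k) = (\<Sum>k<N. a l k * (Sb m / n))"
      using bj by (intro sum.cong) auto
    also have "\<dots> = Sa l * (Sb m / n)" unfolding Sa_def by (simp only: sum_distrib_right)
    finally show False using Sam Sbm n0 N by simp
  qed
  have "\<alpha>c^2 + (real N - 1) * \<beta>c^2 = (cA * cB + (real N - 1) * ((1 - muA) * (1 - muB))) / (real N)^2"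
    unfolding \<alpha>c_def \<beta>c_def using cApos cBpos muA muB
    by (simp add: power_divide real_sqrt_pow2 add_divide_distrib mult_less_0_iff less_le_not_le)
  also have "\<dots> = (1 + (real N - 1) * muA * muB) / real N"
    unfolding cA_def cB_def using Npos by (simp add: field_simps power2_eq_square)
  finally have sq: "(\<Sum>m<N. (lam m)^2) = \<alpha>c^2 + (real N - 1) * \<beta>c^2" using Msum by simp
  show ?thesis by (rule count_final[OF N vals uniq ab bpos sq])
qed

definition gam :: "nat \<Rightarrow> nat \<Rightarrow> real \<Rightarrow> nat \<Rightarrow> real" where
  "gam N a mu j = (if j = 0 then real N / real a else 1 - mu)"
definition cu :: "nat \<Rightarrow> nat \<Rightarrow> real \<Rightarrow> nat \<Rightarrow> nat \<Rightarrow> real" where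
  "cu N a mu j k = hW N k j / sqrt (gam N a mu j)"
definition GG :: "nat \<Rightarrow> nat \<Rightarrow> real \<Rightarrow> (nat \<Rightarrow> complex mat) \<Rightarrow> nat \<Rightarrow> complex mat" where
  "GG N a mu P j = msum a a (\<lambda>k. complex_of_real (cu N a mu j k) \<cdot>\<^sub>m P k) {..<N}"

lemma GG_carrier: "GG N a mu P j \<in> carrier_mat a a" unfolding GG_def by simp

lemma GG_index:
  assumes Pc: "\<forall>k<N. P k \<in> carrier_mat a a" and pq: "p < a" "q < a"
  shows "GG N a mu P j $$ (p,q) = (\<Sum>k<N. complex_of_real (cu N a mu j k) * P k $$ (p,q))"
  unfolding GG_def using pq Pc by (auto intro!: sum.cong)

lemma GG_herm:
  assumes Pc: "\<forall>k<N. P k \<in> carrier_mat a a" and Ph: "\<forall>k<N. mat_adjoint (P k) = P k"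
  shows "hermitian_mat a (GG N a mu P j)"
  unfolding hermitian_mat_def
proof
  show "GG N a mu P j \<in> carrier_mat a a" by (rule GG_carrier)
  show "mat_adjoint (GG N a mu P j) = GG N a mu P j"
  proof (rule eq_matI)
    fix p q assume pq: "p < dim_row (GG N a mu P j)" "q < dim_col (GG N a mu P j)"
    then have pq': "p < a" "q < a" using GG_carrier by (auto simp: GG_def)
    have "mat_adjoint (GG N a mu P j) $$ (p,q) = cnj (GG N a mu P j $$ (q,p))"
      using pq' by (intro adjoint_entry) (auto simp: GG_def)
    also have "\<dots> = cnj (\<Sum>k<N. complex_of_real (cu N a mu j k) * P k $$ (q,p))"
      using pq' Pc by (simp add: GG_index)
    also have "\<dots> = (\<Sum>k<N. complex_of_real (cu N a mu j k) * P k $$ (p,q))"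
      unfolding cnj_sum
    proof (intro sum.cong refl)
      fix k assume k: "k \<in> {..<N}"
      have "P k $$ (p,q) = cnj (P k $$ (q,p))" using herm_entry[of "P k" a p q] Pc Ph k pq' by auto
      then show "cnj (complex_of_real (cu N a mu j k) * P k $$ (q, p)) = complex_of_real (cu N a mu j k) * P k $$ (p, q)"
        by simp
    qed
    also have "\<dots> = GG N a mu P j $$ (p,q)" using pq' Pc by (simp add: GG_index)
    finally show "mat_adjoint (GG N a mu P j) $$ (p,q) = GG N a mu P j $$ (p,q)" .
  qed (auto simp: GG_def)
qed

lemma mtrace_GG:
  assumes Pc: "\<forall>k<N. P k \<in> carrier_mat a a"
  shows "mtrace (GG N a mu P i * GG N a mu P j) =
     (\<Sum>k<N. \<Sum>l<N. complex_of_real (cu N a mu i k) * complex_of_real (cu N a mu j l) * mtrace (P k * P l))"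
proof -
  have c: "complex_of_real (cu N a mu i k) \<cdot>\<^sub>m P k \<in> carrier_mat a a" if "k < N" for k i using Pc that by simp
  have "mtrace (GG N a mu P i * GG N a mu P j) =
     (\<Sum>k<N. mtrace ((complex_of_real (cu N a mu i k) \<cdot>\<^sub>m P k) * GG N a mu P j))"
    unfolding GG_def[of N a mu P i] using c GG_carrier by (intro mtrace_msum_left) auto
  also have "\<dots> = (\<Sum>k<N. complex_of_real (cu N a mu i k) * mtrace (P k * GG N a mu P j))"
    using Pc GG_carrier by (intro sum.cong refl mtrace_smult_left) auto
  also have "\<dots> = (\<Sum>k<N. complex_of_real (cu N a mu i k) *
       (\<Sum>l<N. complex_of_real (cu N a mu j l) * mtrace (P k * P l)))"
  proof (intro sum.cong refl arg_cong[where f="\<lambda>x. _ * x"])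
    fix k assume k: "k \<in> {..<N}"
    have "mtrace (P k * GG N a mu P j) = (\<Sum>l<N. mtrace (P k * (complex_of_real (cu N a mu j l) \<cdot>\<^sub>m P l)))"
      unfolding GG_def[of N a mu P j] using c Pc k by (intro mtrace_msum_right) auto
    also have "\<dots> = (\<Sum>l<N. complex_of_real (cu N a mu j l) * mtrace (P k * P l))"
      using Pc k by (intro sum.cong refl mtrace_smult_right[of "P k" a a]) auto
    finally show "mtrace (P k * GG N a mu P j) = (\<Sum>l<N. complex_of_real (cu N a mu j l) * mtrace (P k * P l))" .
  qed
  also have "\<dots> = (\<Sum>k<N. \<Sum>l<N. complex_of_real (cu N a mu i k) * complex_of_real (cu N a mu j l) * mtrace (P k * P l))"
    by (simp add: sum_distrib_left mult.assoc)
  finally show ?thesis .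
qed

lemma cu_sum:
  assumes N: "N \<ge> 1" and j: "j < N"
  shows "(\<Sum>k<N. cu N a mu j k) = (if j = 0 then sqrt (real N) else 0) / sqrt (gam N a mu j)"
  unfolding cu_def using hW_colsum[OF N j] by (simp add: sum_divide_distrib[symmetric])

lemma cu_orth:
  assumes N: "N \<ge> 1" and i: "i < N" and j: "j < N"
  shows "(\<Sum>k<N. cu N a mu i k * cu N a mu j k) = (if i = j then 1 else 0) / (sqrt (gam N a mu i) * sqrt (gam N a mu j))"
proof -
  have "(\<Sum>k<N. cu N a mu i k * cu N a mu j k) = (\<Sum>k<N. hW N k i * hW N k j) / (sqrt (gam N a mu i) * sqrt (gam N a mu j))"
    unfolding cu_def by (simp add: sum_divide_distrib[symmetric])
  then show ?thesis using hW_orth[OF N i j] by simp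
qed

lemma GG_orth:
  assumes N: "N \<ge> 1" and Pc: "\<forall>k<N. P k \<in> carrier_mat a a"
    and Gr: "\<forall>k<N. \<forall>l<N. mtrace (P k * P l) = (if k = l then 1 else complex_of_real mu)"
    and rel: "1 + (real N - 1) * mu = real N / real a"
    and g1: "N \<ge> 2 \<Longrightarrow> 1 - mu > 0" and a: "a \<ge> 1"
    and i: "i < N" and j: "j < N"
  shows "mtrace (GG N a mu P i * GG N a mu P j) = (if i = j then 1 else 0)"
proof -
  define u where "u = cu N a mu"
  have "mtrace (GG N a mu P i * GG N a mu P j) =
     (\<Sum>k<N. \<Sum>l<N. complex_of_real (u i k) * complex_of_real (u j l) * (if k = l then 1 else complex_of_real mu))"
    unfolding mtrace_GG[OF Pc] u_def using Gr by (intro sum.cong refl) auto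
  also have "\<dots> = complex_of_real (\<Sum>k<N. \<Sum>l<N. u i k * u j l * (mu + (if k = l then 1 - mu else 0)))"
    by (simp add: if_distrib cong: if_cong)
  also have "(\<Sum>k<N. \<Sum>l<N. u i k * u j l * (mu + (if k = l then 1 - mu else 0)))
      = mu * ((\<Sum>k<N. u i k) * (\<Sum>l<N. u j l)) + (1 - mu) * (\<Sum>k<N. u i k * u j k)"
  proof -
    have "(\<Sum>k<N. \<Sum>l<N. u i k * u j l * (mu + (if k = l then 1 - mu else 0)))
       = (\<Sum>k<N. \<Sum>l<N. mu * (u i k * u j l) + (if l = k then (1 - mu) * (u i k * u j l) else 0))"
      by (intro sum.cong refl) (auto simp: algebra_simps)
    also have "\<dots> = (\<Sum>k<N. \<Sum>l<N. mu * (u i k * u j l)) + (\<Sum>k<N. (1 - mu) * (u i k * u j k))"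
      by (simp add: sum.distrib sum.delta)
    also have "(\<Sum>k<N. \<Sum>l<N. mu * (u i k * u j l)) = mu * (\<Sum>k<N. \<Sum>l<N. u i k * u j l)"
      by (simp add: sum_distrib_left)
    also have "(\<Sum>k<N. \<Sum>l<N. u i k * u j l) = (\<Sum>k<N. u i k) * (\<Sum>l<N. u j l)"
      by (rule sum_product[symmetric])
    finally show ?thesis by (simp add: sum_distrib_left)
  qed
  also have "\<dots> = (if i = j then 1 else 0)"
  proof -
    have gpos: "gam N a mu t > 0" if "t < N" for t
    proof (cases "t = 0")
      case True then show ?thesis using N a by (simp add: gam_def)
    next
      case False then have "N \<ge> 2" using that by simp
      then show ?thesis using g1 False by (simp add: gam_def)
    qed
    have s1: "(\<Sum>k<N. u i k) = (if i = 0 then sqrt (real N) else 0) / sqrt (gam N a mu i)"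
      "(\<Sum>k<N. u j k) = (if j = 0 then sqrt (real N) else 0) / sqrt (gam N a mu j)"
      unfolding u_def using cu_sum N i j by auto
    have s2: "(\<Sum>k<N. u i k * u j k) = (if i = j then 1 else 0) / (sqrt (gam N a mu i) * sqrt (gam N a mu j))"
      unfolding u_def using cu_orth N i j by auto
    show ?thesis
    proof (cases "i = j")
      case True
      show ?thesis
      proof (cases "i = 0")
        case True
        have g0: "gam N a mu 0 = real N / real a" by (simp add: gam_def)
        have Np: "real N > 0" "real a > 0" using N a by auto
        have q1: "(sqrt (real N) / sqrt (gam N a mu 0)) * (sqrt (real N) / sqrt (gam N a mu 0)) = real a"
          unfolding g0 using Np by (simp add: real_sqrt_divide field_simps)
        have q2: "1 / (sqrt (gam N a mu 0) * sqrt (gam N a mu 0)) = real a / real N"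
          unfolding g0 using Np by simp
        have rel': "real a * (1 + (real N - 1) * mu) = real N" using rel Np by (simp add: field_simps)
        have "mu * ((\<Sum>k<N. u i k) * (\<Sum>l<N. u j l)) + (1 - mu) * (\<Sum>k<N. u i k * u j k)
            = mu * real a + (1 - mu) * (real a / real N)"
          using s1 s2 True \<open>i = j\<close> q1 q2 by simp
        also have "\<dots> = (real a * (1 + (real N - 1) * mu)) / real N" using Np by (simp add: field_simps)
        also have "\<dots> = 1" unfolding rel' using Np by simp
        finally show ?thesis using \<open>i = j\<close> by simp
      next
        case False
        then show ?thesis using s1 s2 \<open>i = j\<close> gpos[OF i] by (simp add: gam_def)
      qed
    next
      case False
      then have "\<not> (i = 0 \<and> j = 0)" by auto
      then show ?thesis using s1 s2 False by auto
    qed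
  qed
  finally show ?thesis by simp
qed

lemma prod_sums_c:
  fixes c :: complex
  shows "c * ((\<Sum>k<N. f k) * (\<Sum>l<N. g l)) = (\<Sum>k<N. \<Sum>l<N. c * (f k * g l))"
  unfolding sum_product by (simp add: sum_distrib_left)

lemma recomb:
  fixes x y :: "nat \<Rightarrow> complex"
  assumes N: "N \<ge> 1" and gA: "\<forall>j<N. gam N a muA j > 0" and gB: "\<forall>j<N. gam N b muB j > 0"
  shows "(\<Sum>j<N. complex_of_real (sqrt (gam N a muA j * gam N b muB j) / real N) *
            ((\<Sum>k<N. complex_of_real (cu N a muA j k) * x k) * (\<Sum>l<N. complex_of_real (cu N b muB j l) * y l)))
         = (1 / of_nat N) * (\<Sum>k<N. x k * y k)"
proof -
  have coef: "sqrt (gam N a muA j * gam N b muB j) / real N * cu N a muA j k * cu N b muB j l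
       = hW N j k * hW N j l / real N" if "j < N" for j k l
  proof -
    have "sqrt (gam N a muA j) > 0" "sqrt (gam N b muB j) > 0" using gA gB that by auto
    then show ?thesis unfolding cu_def by (simp add: real_sqrt_mult hW_sym[of N k j] hW_sym[of N l j] field_simps)
  qed
  have "(\<Sum>j<N. complex_of_real (sqrt (gam N a muA j * gam N b muB j) / real N) *
            ((\<Sum>k<N. complex_of_real (cu N a muA j k) * x k) * (\<Sum>l<N. complex_of_real (cu N b muB j l) * y l)))
     = (\<Sum>j<N. \<Sum>k<N. \<Sum>l<N. complex_of_real (sqrt (gam N a muA j * gam N b muB j) / real N * cu N a muA j k * cu N b muB j l) * (x k * y l))"
    unfolding prod_sums_c by (intro sum.cong refl) (simp add: algebra_simps)
  also have "\<dots> = (\<Sum>j<N. \<Sum>k<N. \<Sum>l<N. complex_of_real (hW N j k * hW N j l / real N) * (x k * y l))"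
    using coef by (intro sum.cong refl) auto
  also have "\<dots> = (\<Sum>k<N. \<Sum>l<N. complex_of_real ((\<Sum>j<N. hW N j k * hW N j l) / real N) * (x k * y l))"
    by (subst sum.swap, rule sum.cong[OF refl], subst sum.swap) (simp add: sum_distrib_right sum_divide_distrib)
  also have "\<dots> = (\<Sum>k<N. \<Sum>l<N. (if k = l then complex_of_real (1 / real N) * (x k * y l) else 0))"
    using hW_orth[OF N] by (intro sum.cong refl) auto
  also have "\<dots> = (1 / of_nat N) * (\<Sum>k<N. x k * y k)"
    by (simp add: sum.delta sum_distrib_left)
  finally show ?thesis .
qed

lemma gam_pos:
  assumes N: "N \<ge> 1" and a: "a \<ge> 1" and g1: "N \<ge> 2 \<Longrightarrow> 1 - mu > 0"
  shows "\<forall>j<N. gam N a mu j > 0"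
proof (intro allI impI)
  fix j assume j: "j < N"
  show "gam N a mu j > 0"
  proof (cases "j = 0")
    case True then show ?thesis using N a by (simp add: gam_def)
  next
    case False then have "N \<ge> 2" using j by simp
    then show ?thesis using g1 False by (simp add: gam_def)
  qed
qed

lemma div_mod_bounds:
  fixes r a b :: nat
  assumes "r < a * b"
  shows "r div b < a" "r mod b < b"
proof -
  have b: "b > 0" using assms by (cases b) auto
  show "r div b < a" using assms b by (simp add: less_mult_imp_div_less)
  show "r mod b < b" using b by simp
qed

lemma existence:
  fixes PA PB :: "nat \<Rightarrow> complex mat"
  assumes N: "N \<ge> 1" and a: "a \<ge> 1" and b: "b \<ge> 1" and nN: "(min a b)^2 = N"
    and PAc: "\<forall>k<N. PA k \<in> carrier_mat a a" and PAh: "\<forall>k<N. mat_adjoint (PA k) = PA k"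
    and GrA: "\<forall>k<N. \<forall>l<N. mtrace (PA k * PA l) = (if k = l then 1 else complex_of_real muA)"
    and relA: "1 + (real N - 1) * muA = real N / real a" and gA: "N \<ge> 2 \<Longrightarrow> 1 - muA > 0"
    and PBc: "\<forall>k<N. PB k \<in> carrier_mat b b" and PBh: "\<forall>k<N. mat_adjoint (PB k) = PB k"
    and GrB: "\<forall>k<N. \<forall>l<N. mtrace (PB k * PB l) = (if k = l then 1 else complex_of_real muB)"
    and relB: "1 + (real N - 1) * muB = real N / real b" and gB: "N \<ge> 2 \<Longrightarrow> 1 - muB > 0"
  shows "\<exists>lam G H. op_schmidt_decomp a b ((1 / of_nat N) \<cdot>\<^sub>m msum (a * b) (a * b) (\<lambda>k. kron (PA k) (PB k)) {..<N}) lam G H"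
proof -
  define G where "G = GG N a muA PA"
  define H where "H = GG N b muB PB"
  define lam where "lam j = sqrt (gam N a muA j * gam N b muB j) / real N" for j
  have gpA: "\<forall>j<N. gam N a muA j > 0" by (rule gam_pos[OF N a gA])
  have gpB: "\<forall>j<N. gam N b muB j > 0" by (rule gam_pos[OF N b gB])
  have Gc: "G j \<in> carrier_mat a a" for j unfolding G_def by (rule GG_carrier)
  have Hc: "H j \<in> carrier_mat b b" for j unfolding H_def by (rule GG_carrier)
  have rho: "(1 / of_nat N) \<cdot>\<^sub>m msum (a * b) (a * b) (\<lambda>k. kron (PA k) (PB k)) {..<N}
      = msum (a * b) (a * b) (\<lambda>j. complex_of_real (lam j) \<cdot>\<^sub>m kron (G j) (H j)) {..<N}"
  proof (rule eq_matI)
    fix r c assume rc: "r < dim_row (msum (a * b) (a * b) (\<lambda>j. complex_of_real (lam j) \<cdot>\<^sub>m kron (G j) (H j)) {..<N})"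
      "c < dim_col (msum (a * b) (a * b) (\<lambda>j. complex_of_real (lam j) \<cdot>\<^sub>m kron (G j) (H j)) {..<N})"
    then have rc': "r < a * b" "c < a * b" by auto
    note bd = div_mod_bounds[OF rc'(1)] div_mod_bounds[OF rc'(2)]
    define x where "x k = PA k $$ (r div b, c div b)" for k
    define y where "y k = PB k $$ (r mod b, c mod b)" for k
    have kA: "kron (PA k) (PB k) $$ (r,c) = x k * y k" if "k < N" for k
    proof -
      have "dim_row (PA k) = a" "dim_col (PA k) = a" "dim_row (PB k) = b" "dim_col (PB k) = b"
        using PAc PBc that by auto
      then show ?thesis using rc' unfolding x_def y_def by (subst kron_index) auto
    qed
    have kG: "kron (G j) (H j) $$ (r,c) = (\<Sum>k<N. complex_of_real (cu N a muA j k) * x k) * (\<Sum>l<N. complex_of_real (cu N b muB j l) * y l)" for j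
      using Gc[of j] Hc[of j] rc' bd unfolding x_def y_def G_def H_def
      by (subst kron_index) (auto simp: GG_index[OF PAc] GG_index[OF PBc])
    have "((1 / of_nat N) \<cdot>\<^sub>m msum (a * b) (a * b) (\<lambda>k. kron (PA k) (PB k)) {..<N}) $$ (r,c)
        = (1 / of_nat N) * (\<Sum>k<N. x k * y k)"
      using rc' kA by simp
    also have "\<dots> = (\<Sum>j<N. complex_of_real (lam j) * ((\<Sum>k<N. complex_of_real (cu N a muA j k) * x k) * (\<Sum>l<N. complex_of_real (cu N b muB j l) * y l)))"
      unfolding lam_def by (rule recomb[OF N gpA gpB, symmetric])
    also have "\<dots> = msum (a * b) (a * b) (\<lambda>j. complex_of_real (lam j) \<cdot>\<^sub>m kron (G j) (H j)) {..<N} $$ (r,c)"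
    proof -
      have "(complex_of_real (lam j) \<cdot>\<^sub>m kron (G j) (H j)) $$ (r,c) = complex_of_real (lam j) * kron (G j) (H j) $$ (r,c)" for j
      proof -
        have "dim_row (G j) = a" "dim_col (G j) = a" "dim_row (H j) = b" "dim_col (H j) = b"
          using Gc Hc by auto
        then show ?thesis using rc' by (intro index_smult_mat(1)) auto
      qed
      then show ?thesis using rc' kG by simp
    qed
    finally show "((1 / of_nat N) \<cdot>\<^sub>m msum (a * b) (a * b) (\<lambda>k. kron (PA k) (PB k)) {..<N}) $$ (r,c)
        = msum (a * b) (a * b) (\<lambda>j. complex_of_real (lam j) \<cdot>\<^sub>m kron (G j) (H j)) {..<N} $$ (r,c)" .
  qed auto
  have "op_schmidt_decomp a b ((1 / of_nat N) \<cdot>\<^sub>m msum (a * b) (a * b) (\<lambda>k. kron (PA k) (PB k)) {..<N}) lam G H"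
    unfolding op_schmidt_decomp_def Let_def nN
  proof (intro conjI allI impI)
    fix k assume k: "k < N"
    show "lam k \<ge> 0" unfolding lam_def using gpA gpB k by (intro divide_nonneg_nonneg real_sqrt_ge_zero mult_nonneg_nonneg) (auto simp: less_imp_le)
    show "hermitian_mat a (G k)" unfolding G_def by (rule GG_herm[OF PAc PAh])
    show "hermitian_mat b (H k)" unfolding H_def by (rule GG_herm[OF PBc PBh])
  next
    fix k l assume "k < N" "l < N"
    then show "mtrace (G k * G l) = (if k = l then 1 else 0)"
      unfolding G_def using GG_orth[OF N PAc GrA relA gA a] by blast
  next
    fix k l assume "k < N" "l < N"
    then show "mtrace (H k * H l) = (if k = l then 1 else 0)"
      unfolding H_def using GG_orth[OF N PBc GrB relB gB b] by blast
  next
    show "(1 / of_nat N) \<cdot>\<^sub>m msum (a * b) (a * b) (\<lambda>k. kron (PA k) (PB k)) {..<N}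
      = msum (a * b) (a * b) (\<lambda>j. complex_of_real (lam j) \<cdot>\<^sub>m kron (G j) (H j)) {..<N}" by (rule rho)
  qed
  then show ?thesis by blast
qed

lemma collapse_delta:
  fixes f :: "nat \<Rightarrow> complex"
  assumes "m < N"
  shows "(\<Sum>k<N. f k * (if k = m then 1 else 0)) = f m"
proof -
  have "(\<Sum>k<N. f k * (if k = m then 1 else 0)) = (\<Sum>k<N. if k = m then f k else 0)"
    by (intro sum.cong) auto
  then show ?thesis using assms by simp
qed

lemma uniq_facts:
  fixes PA PB G H :: "nat \<Rightarrow> complex mat" and lam :: "nat \<Rightarrow> real"
  assumes N: "N \<ge> 1"
    and PAc: "\<forall>k<N. PA k \<in> carrier_mat a a"
    and GrA: "\<forall>k<N. \<forall>l<N. mtrace (PA k * PA l) = (if k = l then 1 else complex_of_real muA)"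
    and PBc: "\<forall>k<N. PB k \<in> carrier_mat b b"
    and GrB: "\<forall>k<N. \<forall>l<N. mtrace (PB k * PB l) = (if k = l then 1 else complex_of_real muB)"
    and Gc: "\<forall>k<N. G k \<in> carrier_mat a a" and Hc: "\<forall>k<N. H k \<in> carrier_mat b b"
    and GO: "\<forall>k<N. \<forall>l<N. mtrace (G k * G l) = (if k = l then 1 else 0)"
    and HO: "\<forall>k<N. \<forall>l<N. mtrace (H k * H l) = (if k = l then 1 else 0)"
    and rho1: "rho = msum (a * b) (a * b) (\<lambda>k. complex_of_real (lam k) \<cdot>\<^sub>m kron (G k) (H k)) {..<N}"
    and rho2: "rho = msum (a * b) (a * b) (\<lambda>k. (1 / of_nat N) \<cdot>\<^sub>m kron (PA k) (PB k)) {..<N}"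
  defines "aa \<equiv> \<lambda>m k. mtrace (PA k * G m)" and "bb \<equiv> \<lambda>m k. mtrace (PB k * H m)"
  shows "\<forall>m<N. \<forall>j<N. of_real (lam m) * aa m j = (\<Sum>k<N. (if k = j then 1 else of_real muA) * bb m k) / of_nat N"
    and "\<forall>m<N. \<forall>j<N. of_real (lam m) * bb m j = (\<Sum>k<N. aa m k * (if k = j then 1 else of_real muB)) / of_nat N"
    and "\<forall>l<N. \<forall>m<N. (if l = m then of_real (lam m) else 0) = (\<Sum>k<N. aa l k * bb m k) / of_nat N"
    and "(\<Sum>m<N. (lam m)^2) = (1 + (real N - 1) * muA * muB) / real N"
proof -
  have star: "(\<Sum>k<N. complex_of_real (lam k) * mtrace (G k * X) * mtrace (H k * Y))
      = (\<Sum>k<N. (1 / of_nat N) * mtrace (PA k * X) * mtrace (PB k * Y))"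
    if X: "X \<in> carrier_mat a a" and Y: "Y \<in> carrier_mat b b" for X Y
  proof -
    have "(\<Sum>k<N. complex_of_real (lam k) * mtrace (G k * X) * mtrace (H k * Y)) = mtrace (rho * kron X Y)"
      unfolding rho1 using Gc Hc X Y by (intro key_left[symmetric]) auto
    also have "\<dots> = (\<Sum>k<N. (1 / of_nat N) * mtrace (PA k * X) * mtrace (PB k * Y))"
      unfolding rho2 using PAc PBc X Y by (intro key_left) auto
    finally show ?thesis .
  qed
  have Nc: "(of_nat N :: complex) \<noteq> 0" using N by simp
  show "\<forall>m<N. \<forall>j<N. of_real (lam m) * aa m j = (\<Sum>k<N. (if k = j then 1 else of_real muA) * bb m k) / of_nat N"
  proof (intro allI impI)
    fix m j assume mj: "m < N" "j < N"
    have "(\<Sum>k<N. complex_of_real (lam k) * mtrace (G k * PA j) * mtrace (H k * H m))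
        = (\<Sum>k<N. complex_of_real (lam k) * mtrace (G k * PA j) * (if k = m then 1 else 0))"
      using HO mj by (intro sum.cong refl) auto
    also have "\<dots> = complex_of_real (lam m) * aa m j"
      using mj PAc Gc unfolding aa_def by (simp add: collapse_delta mtrace_comm[of "G m" a a "PA j"])
    finally have l: "(\<Sum>k<N. complex_of_real (lam k) * mtrace (G k * PA j) * mtrace (H k * H m)) = complex_of_real (lam m) * aa m j" .
    have "(\<Sum>k<N. (1 / of_nat N) * mtrace (PA k * PA j) * mtrace (PB k * H m))
        = (\<Sum>k<N. (if k = j then 1 else of_real muA) * bb m k) / of_nat N"
      using GrA mj unfolding bb_def by (simp add: sum_divide_distrib)
    with l star[of "PA j" "H m"] PAc Hc mj show "of_real (lam m) * aa m j = (\<Sum>k<N. (if k = j then 1 else of_real muA) * bb m k) / of_nat N"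
      by simp
  qed
  show "\<forall>m<N. \<forall>j<N. of_real (lam m) * bb m j = (\<Sum>k<N. aa m k * (if k = j then 1 else of_real muB)) / of_nat N"
  proof (intro allI impI)
    fix m j assume mj: "m < N" "j < N"
    have "(\<Sum>k<N. complex_of_real (lam k) * mtrace (G k * G m) * mtrace (H k * PB j))
        = (\<Sum>k<N. (complex_of_real (lam k) * mtrace (H k * PB j)) * (if k = m then 1 else 0))"
      using GO mj by (intro sum.cong refl) auto
    also have "\<dots> = complex_of_real (lam m) * bb m j"
      using mj PBc Hc unfolding bb_def by (simp add: collapse_delta mtrace_comm[of "H m" b b "PB j"])
    finally have l: "(\<Sum>k<N. complex_of_real (lam k) * mtrace (G k * G m) * mtrace (H k * PB j)) = complex_of_real (lam m) * bb m j" .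
    have "(\<Sum>k<N. (1 / of_nat N) * mtrace (PA k * G m) * mtrace (PB k * PB j))
        = (\<Sum>k<N. aa m k * (if k = j then 1 else of_real muB)) / of_nat N"
      using GrB mj unfolding aa_def by (simp add: sum_divide_distrib mult.commute)
    with l star[of "G m" "PB j"] Gc PBc mj show "of_real (lam m) * bb m j = (\<Sum>k<N. aa m k * (if k = j then 1 else of_real muB)) / of_nat N"
      by simp
  qed
  show "\<forall>l<N. \<forall>m<N. (if l = m then of_real (lam m) else 0) = (\<Sum>k<N. aa l k * bb m k) / of_nat N"
  proof (intro allI impI)
    fix l m assume lm: "l < N" "m < N"
    have "(\<Sum>k<N. complex_of_real (lam k) * mtrace (G k * G l) * mtrace (H k * H m))
        = (\<Sum>k<N. (complex_of_real (lam k) * (if k = m then 1 else 0)) * (if k = l then 1 else 0))"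
      using GO HO lm by (intro sum.cong refl) auto
    also have "\<dots> = (if l = m then of_real (lam m) else 0)"
      using lm by (simp add: collapse_delta)
    finally have l: "(\<Sum>k<N. complex_of_real (lam k) * mtrace (G k * G l) * mtrace (H k * H m)) = (if l = m then of_real (lam m) else 0)" .
    have "(\<Sum>k<N. (1 / of_nat N) * mtrace (PA k * G l) * mtrace (PB k * H m))
        = (\<Sum>k<N. aa l k * bb m k) / of_nat N"
      unfolding aa_def bb_def by (simp add: sum_divide_distrib)
    with l star[of "G l" "H m"] Gc Hc lm show "(if l = m then of_real (lam m) else 0) = (\<Sum>k<N. aa l k * bb m k) / of_nat N"
      by simp
  qed
  have rc: "rho \<in> carrier_mat (a*b) (a*b)" unfolding rho1 by simp
  have "mtrace (rho * rho) = (\<Sum>l<N. complex_of_real (lam l) * mtrace (rho * kron (G l) (H l)))"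
    using rc Gc Hc by (subst (2) rho1, intro key_right) auto
  also have "\<dots> = (\<Sum>l<N. complex_of_real (lam l) * complex_of_real (lam l))"
  proof (intro sum.cong refl arg_cong[where f="\<lambda>x. _ * x"])
    fix l assume l: "l \<in> {..<N}"
    have "mtrace (rho * kron (G l) (H l)) = (\<Sum>k<N. complex_of_real (lam k) * mtrace (G k * G l) * mtrace (H k * H l))"
      unfolding rho1 using Gc Hc l by (intro key_left) auto
    also have "\<dots> = (\<Sum>k<N. complex_of_real (lam k) * (if k = l then 1 else 0))"
      using GO HO l by (intro sum.cong refl) auto
    also have "\<dots> = complex_of_real (lam l)" using l by (simp add: collapse_delta)
    finally show "mtrace (rho * kron (G l) (H l)) = complex_of_real (lam l)" .
  qed
  finally have t1: "mtrace (rho * rho) = complex_of_real (\<Sum>l<N. (lam l)^2)" by (simp add: power2_eq_square)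
  have "mtrace (rho * rho) = (\<Sum>l<N. (1 / of_nat N) * mtrace (rho * kron (PA l) (PB l)))"
    using rc PAc PBc by (subst (2) rho2, intro key_right) auto
  also have "\<dots> = (\<Sum>l<N. (1 / of_nat N) * ((1 / of_nat N) * (1 + (of_nat N - 1) * (of_real muA * of_real muB))))"
  proof (intro sum.cong refl arg_cong[where f="\<lambda>x. _ * x"])
    fix l assume l: "l \<in> {..<N}"
    have "mtrace (rho * kron (PA l) (PB l)) = (\<Sum>k<N. (1 / of_nat N) * mtrace (PA k * PA l) * mtrace (PB k * PB l))"
      unfolding rho2 using PAc PBc l by (intro key_left) auto
    also have "\<dots> = (1 / of_nat N) * (\<Sum>k<N. (if k = l then 1 else of_real muA * of_real muB) * 1)"
      unfolding sum_distrib_left using GrA GrB l by (intro sum.cong refl) auto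
    also have "\<dots> = (1 / of_nat N) * ((1 - of_real muA * of_real muB) * 1 + of_real muA * of_real muB * of_nat N)"
      using l by (subst sum_gram_left) auto
    also have "\<dots> = (1 / of_nat N) * (1 + (of_nat N - 1) * (of_real muA * of_real muB))"
      by (simp add: algebra_simps)
    finally show "mtrace (rho * kron (PA l) (PB l)) = (1 / of_nat N) * (1 + (of_nat N - 1) * (of_real muA * of_real muB))" .
  qed
  also have "\<dots> = complex_of_real ((1 + (real N - 1) * muA * muB) / real N)"
    using Nc by (simp add: field_simps power2_eq_square)
  finally show "(\<Sum>m<N. (lam m)^2) = (1 + (real N - 1) * muA * muB) / real N"
    using t1 by (metis of_real_eq_iff)
qed

lemma kron_carrier_sq: "A \<in> carrier_mat a a \<Longrightarrow> B \<in> carrier_mat b b \<Longrightarrow> kron A B \<in> carrier_mat (a*b) (a*b)"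
  using kron_carrier[of A B] by auto

lemma sqrt_unique_nonneg: "x \<ge> 0 \<Longrightarrow> y \<ge> 0 \<Longrightarrow> x^2 = y^2 \<Longrightarrow> x = (y::real)"
  by (simp add: power2_eq_iff_nonneg)

theorem theorem2:
  fixes dA dB :: nat and PA PB :: "nat \<Rightarrow> complex mat"
  defines "d \<equiv> min dA dB" and "D \<equiv> max dA dB"
  assumes "dA \<ge> 1" and "dB \<ge> 1"
    and "quantum_design dA (d^2) PA" and "regular_r1 dA (d^2) PA"
    and "coherent dA (d^2) PA" and "degree1 (d^2) PA"
    and "quantum_design dB (d^2) PB" and "regular_r1 dB (d^2) PB"
    and "coherent dB (d^2) PB" and "degree1 (d^2) PB"
  defines "rho \<equiv> (1 / of_nat (d^2)) \<cdot>\<^sub>m msum (dA * dB) (dA * dB) (\<lambda>k. kron (PA k) (PB k)) {..<d^2}"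
    and "\<alpha> \<equiv> 1 / sqrt (real (D * d))"
    and "\<beta> \<equiv> sqrt ((real D - 1) / (real D * (real d ^ 2 - 1)) * ((real d - 1) / (real d * (real d ^ 2 - 1))))"
  shows "(\<exists>lam G H. op_schmidt_decomp dA dB rho lam G H) \<and>
         (\<forall>lam G H. op_schmidt_decomp dA dB rho lam G H \<longrightarrow>
            mset (map lam [0..<d^2]) = {#\<alpha>#} + replicate_mset (d^2 - 1) \<beta>)"
proof -
  define N where "N = d^2"
  note a = assms(3-12)[unfolded N_def[symmetric]]
  have d1: "d \<ge> 1" unfolding d_def using a by simp
  have N1: "N \<ge> 1" unfolding N_def using d1 by simp
  have dAd: "dA \<ge> d" "dB \<ge> d" unfolding d_def by auto
  have nN: "(min dA dB)^2 = N" unfolding N_def d_def ..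
  obtain muA where muA: "\<forall>k<N. \<forall>l<N. k \<noteq> l \<longrightarrow> mtrace (PA k * PA l) = complex_of_real muA"
    using a(6) unfolding degree1_def by blast
  obtain muB where muB: "\<forall>k<N. \<forall>l<N. k \<noteq> l \<longrightarrow> mtrace (PB k * PB l) = complex_of_real muB"
    using a(10) unfolding degree1_def by blast
  note FA = design_facts[OF a(3,4,5,1)] and FB = design_facts[OF a(7,8,9,2)]
  note GA = design_gram[OF a(3,4,5,1) N1 muA] and GB = design_gram[OF a(7,8,9,2) N1 muB]
  have PAh: "\<forall>k<N. mat_adjoint (PA k) = PA k" using a(3) unfolding quantum_design_def orth_proj_def by auto
  have PBh: "\<forall>k<N. mat_adjoint (PB k) = PB k" using a(7) unfolding quantum_design_def orth_proj_def by auto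
  have gpos: "1 - mu > 0" if N2: "N \<ge> 2" and rel: "1 + (real N - 1) * mu = real N / real x" and x: "x \<ge> d" for mu x
  proof -
    have "d \<ge> 2"
    proof (rule ccontr)
      assume "\<not> d \<ge> 2" then have "d = 1" using d1 by simp
      then show False using N2 unfolding N_def by simp
    qed
    then have xr: "real x \<ge> 2" using x by simp
    have "(real N - 1) * (1 - mu) = real N - real N / real x" using rel by (simp add: algebra_simps)
    also have "\<dots> = real N * (real x - 1) / real x" using xr by (simp add: field_simps)
    also have "\<dots> > 0" using xr N2 by simp
    finally have "(real N - 1) * (1 - mu) > 0" .
    moreover have "real N - 1 > 0" using N2 by simp
    ultimately show ?thesis by (simp add: zero_less_mult_iff)
  qed
  have gA: "N \<ge> 2 \<Longrightarrow> 1 - muA > 0" using gpos GA(2) dAd by blast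
  have gB: "N \<ge> 2 \<Longrightarrow> 1 - muB > 0" using gpos GB(2) dAd by blast
  have rho': "rho = (1 / of_nat N) \<cdot>\<^sub>m msum (dA * dB) (dA * dB) (\<lambda>k. kron (PA k) (PB k)) {..<N}"
    unfolding rho_def N_def ..
  have part1: "\<exists>lam G H. op_schmidt_decomp dA dB rho lam G H"
    unfolding rho' by (rule existence[OF N1 a(1,2) nN FA(1) PAh GA(1,2) gA FB(1) PBh GB(1,2) gB])
  have part2: "mset (map lam [0..<N]) = {#\<alpha>#} + replicate_mset (N - 1) \<beta>"
    if dec: "op_schmidt_decomp dA dB rho lam G H" for lam G H
  proof -
    have dec': "(\<forall>k<N. lam k \<ge> 0 \<and> hermitian_mat dA (G k) \<and> hermitian_mat dB (H k)) \<and>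
       (\<forall>k<N. \<forall>l<N. mtrace (G k * G l) = (if k = l then 1 else 0)) \<and>
       (\<forall>k<N. \<forall>l<N. mtrace (H k * H l) = (if k = l then 1 else 0)) \<and>
       rho = msum (dA * dB) (dA * dB) (\<lambda>k. complex_of_real (lam k) \<cdot>\<^sub>m kron (G k) (H k)) {..<N}"
      using dec unfolding op_schmidt_decomp_def Let_def nN .
    have Gc: "\<forall>k<N. G k \<in> carrier_mat dA dA" and Hc: "\<forall>k<N. H k \<in> carrier_mat dB dB"
      using dec' unfolding hermitian_mat_def by auto
    have rho2: "rho = msum (dA * dB) (dA * dB) (\<lambda>k. (1 / of_nat N) \<cdot>\<^sub>m kron (PA k) (PB k)) {..<N}"
      unfolding rho' using FA(1) FB(1) by (intro smult_msum) (auto intro: kron_carrier_sq)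
    note U = uniq_facts[OF N1 FA(1) GA(1) FB(1) GB(1) Gc Hc _ _ _ rho2, of lam]
    have lam0: "\<forall>k<N. lam k \<ge> 0" using dec' by auto
    have GO: "\<forall>k<N. \<forall>l<N. mtrace (G k * G l) = (if k = l then 1 else 0)" using dec' by blast
    have HO: "\<forall>k<N. \<forall>l<N. mtrace (H k * H l) = (if k = l then 1 else 0)" using dec' by blast
    have rho1: "rho = msum (dA * dB) (dA * dB) (\<lambda>k. complex_of_real (lam k) \<cdot>\<^sub>m kron (G k) (H k)) {..<N}"
      using dec' by blast
    note U = uniq_facts[OF N1 FA(1) GA(1) FB(1) GB(1) Gc Hc GO HO rho1 rho2]
    have Dd: "real (D * d) = real dA * real dB" unfolding D_def d_def by (cases "dA \<le> dB") (auto simp: max_def min_def)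
    have Dd1: "(real D - 1) * (real d - 1) = (real dA - 1) * (real dB - 1)"
      unfolding D_def d_def by (cases "dA \<le> dB") (auto simp: max_def min_def)
    have Nr: "real N = real d ^ 2" unfolding N_def by simp
    show ?thesis
    proof (cases "N = 1")
      case True
      have "(lam 0)^2 = 1" using U(4) True by simp
      then have l1: "lam 0 = 1" using lam0 True by (simp add: power2_eq_1_iff)
      have "real dA = 1" using GA(2) True a(1) by (simp add: field_simps)
      moreover have "real dB = 1" using GB(2) True a(2) by (simp add: field_simps)
      ultimately have "\<alpha> = 1" unfolding \<alpha>_def using Dd by simp
      then show ?thesis using l1 True by simp
    next
      case False
      then have N2: "N \<ge> 2" using N1 by simp
      have mu0: "\<not> (muA = 0 \<and> muB = 0)"
      proof
        assume "muA = 0 \<and> muB = 0"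
        then have e: "real N / real dA = 1" "real N / real dB = 1" using GA(2) GB(2) by auto
        have "real N = real dA" using e(1) a(1) by (simp add: divide_eq_1_iff)
        then have "dA = N" by (simp only: of_nat_eq_iff)
        have "real N = real dB" using e(2) a(2) by (simp add: divide_eq_1_iff)
        then have "dB = N" by (simp only: of_nat_eq_iff)
        have "d = N" unfolding d_def using \<open>dA = N\<close> \<open>dB = N\<close> by simp
        then have dd: "d * d = d" unfolding N_def power2_eq_square by (rule sym)
        have "d = 1"
        proof (rule ccontr)
          assume "d \<noteq> 1" then have d2: "d \<ge> 2" using d1 by simp
          then have "2 * d \<le> d * d" by (intro mult_right_mono) auto
          then show False using dd d2 by linarith
        qed
        then show False using N2 unfolding N_def by simp
      qed
      have M: "mset (map lam [0..<N]) = {#sqrt ((1 + (real N - 1) * muA) * (1 + (real N - 1) * muB)) / real N#}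
          + replicate_mset (N-1) (sqrt ((1 - muA) * (1 - muB)) / real N)"
        by (rule uniq_core[OF N2 lam0 GA(3)[OF N2] gA[OF N2] GB(3)[OF N2] gB[OF N2] mu0 U(1) U(2) U(3) U(4)])
      have Np: "real N > 0" using N1 by simp
      have dAp: "real dA > 0" "real dB > 0" using a(1,2) by auto
      have ea: "sqrt ((1 + (real N - 1) * muA) * (1 + (real N - 1) * muB)) / real N = \<alpha>"
      proof -
        have "(1 + (real N - 1) * muA) * (1 + (real N - 1) * muB) = (real N / real dA) * (real N / real dB)"
          using GA(2) GB(2) by simp
        also have "\<dots> = (real N)^2 / (real dA * real dB)" by (simp add: power2_eq_square)
        finally have "sqrt ((1 + (real N - 1) * muA) * (1 + (real N - 1) * muB)) = real N / sqrt (real dA * real dB)"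
          using Np by (simp add: real_sqrt_divide)
        then show ?thesis unfolding \<alpha>_def Dd using Np by simp
      qed
      have eb: "sqrt ((1 - muA) * (1 - muB)) / real N = \<beta>"
      proof -
        have N1r: "real N - 1 > 0" using N2 by simp
        have Dpos: "D > 0" "d > 0" using d1 a(1) unfolding D_def by auto
        have hA: "(real N - 1) * (1 - muA) = real N * (real dA - 1) / real dA"
        proof -
          have "(real N - 1) * (1 - muA) = real N - (1 + (real N - 1) * muA)" by (simp add: algebra_simps)
          also have "\<dots> = real N - real N / real dA" using GA(2) by simp
          also have "\<dots> = real N * (real dA - 1) / real dA" using dAp by (simp add: diff_divide_distrib right_diff_distrib)
          finally show ?thesis .
        qed
        have hB: "(real N - 1) * (1 - muB) = real N * (real dB - 1) / real dB"
        proof -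
          have "(real N - 1) * (1 - muB) = real N - (1 + (real N - 1) * muB)" by (simp add: algebra_simps)
          also have "\<dots> = real N - real N / real dB" using GB(2) by simp
          also have "\<dots> = real N * (real dB - 1) / real dB" using dAp by (simp add: diff_divide_distrib right_diff_distrib)
          finally show ?thesis .
        qed
        have "((real N - 1) * (1 - muA)) * ((real N - 1) * (1 - muB)) = (real N)^2 * ((real dA - 1) * (real dB - 1) / (real dA * real dB))"
          unfolding hA hB by (simp add: power2_eq_square)
        then have "(1 - muA) * (1 - muB) * ((real N - 1)^2) = (real N)^2 * ((real D - 1) * (real d - 1) / real (D * d))"
          unfolding Dd Dd1 by (simp add: power2_eq_square algebra_simps)
        then have "(1 - muA) * (1 - muB) / (real N)^2 = ((real D - 1) * (real d - 1) / real (D * d)) / (real N - 1)^2"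
          using Np N1r Dpos by (simp add: divide_simps) (simp add: algebra_simps)
        also have "\<dots> = (real D - 1) / (real D * (real d ^ 2 - 1)) * ((real d - 1) / (real d * (real d ^ 2 - 1)))"
          unfolding Nr[symmetric] by (simp add: power2_eq_square)
        finally have "sqrt ((1 - muA) * (1 - muB) / (real N)^2) = \<beta>" unfolding \<beta>_def by simp
        then show ?thesis using Np by (simp add: real_sqrt_divide)
      qed
      show ?thesis using M ea eb by simp
    qed
  qed
  show ?thesis using part1 part2 unfolding N_def by blast
qed

end
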